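(* Let $\lambda$ be a regular uncountable cardinal and suppose $\square(\lambda,<\omega)$ holds. Then for every stationary $S\subseteq\lambda$, $\mathrm{Refl}(2,S)$ fails; that is, there are two stationary subsets of $S$ that do not reflect simultaneously.
   Context: For a set of ordinals $A$, $\mathrm{acc}(A)$ is the set of $\beta<\sup\{\alpha+1\mid\alpha\in A\}$ with $\beta=\sup(A\cap\beta)$. A coherent sequence of length $\lambda$ and width $<\eta$ is $\mathcal{C}=\langle\mathcal{C}_\alpha\mid\alpha<\lambda\rangle$ where each $\mathcal{C}_\alpha$ is a nonempty set of fewer than $\eta$ closed unbounded subsets of $\alpha$ (for successor $\alpha=\beta+1$, $\mathcal{C}_\alpha=\{\{\beta\}\}$), such that for all $\beta<\lambda$, $C\in\mathcal{C}_\beta$ and $\alpha\in\mathrm{acc}(C)$, $C\cap\alpha\in\mathcal{C}_\alpha$. A thread is a club $D\subseteq\lambda$ with $D\cap\alpha\in\mathcal{C}_\alpha$ for all $\alpha\in\mathrm{acc}(D)$. $\square(\lambda,<\eta)$ asserts the existence of a coherent sequence of length $\lambda$ and width $<\eta$ with no thread; so $\square(\lambda,<\omega)$ concerns sequences with each $\mathcal{C}_\alpha$ finite. A stationary $S\subseteq\lambda$ reflects at $\alpha<\lambda$ if $\mathrm{cf}(\alpha)>\omega$ and $S\cap\alpha$ is stationary in $\alpha$; a collection of stationary sets reflects simultaneously if there is one $\alpha<\lambda$ at which all of them reflect. $\mathrm{Refl}(<\kappa,S)$ says every collection of fewer than $\kappa$ stationary subsets of $S$ reflects simultaneously; $\mathrm{Refl}(\kappa,S)$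 means $\mathrm{Refl}(<\kappa^+,S)$. *)

theory Defs
  imports Main "HOL-Library.Countable_Set"
begin

text \<open>The regular uncountable cardinal lambda is represented by a well-ordered type 'a:
  the ordinals below lambda are the elements of 'a, ordered by <.\<close>

definition regular_uncountable_cardinal_type :: "'a::wellorder itself \<Rightarrow> bool" where
  "regular_uncountable_cardinal_type _ \<longleftrightarrow>
     uncountable (UNIV :: 'a set)
   \<and> (\<forall>a::'a. (card_of {x. x < a}, card_of (UNIV :: 'a set)) \<in> ordLess)
   \<and> (\<forall>X::'a set. (card_of X, card_of (UNIV :: 'a set)) \<in> ordLess \<longrightarrow> (\<exists>b. \<forall>x\<in>X. x < b))"

definition is_succ_of :: "'a::wellorder \<Rightarrow> 'a \<Rightarrow> bool" where
  "is_succ_of b a \<longleftrightarrow> a < b \<and> \<not> (\<exists>g. a < g \<and> g < b)"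

text \<open>acc(A): beta < sup{alpha+1 | alpha in A} and beta = sup(A \<inter> beta).\<close>
definition acc :: "'a::wellorder set \<Rightarrow> 'a set" where
  "acc A = {b. (\<exists>a\<in>A. b \<le> a) \<and> (\<forall>g<b. \<exists>a\<in>A. g < a \<and> a < b)}"

definition club_below :: "'a::wellorder \<Rightarrow> 'a set \<Rightarrow> bool" where
  "club_below a C \<longleftrightarrow> C \<subseteq> {x. x < a}
     \<and> (\<forall>b<a. \<exists>c\<in>C. b \<le> c)
     \<and> (\<forall>b<a. (\<exists>g. g < b) \<and> (\<forall>g<b. \<exists>c\<in>C. g < c \<and> c < b) \<longrightarrow> b \<in> C)"

definition club :: "'a::wellorder set \<Rightarrow> bool" where
  "club C \<longleftrightarrow> (\<forall>b. \<exists>c\<in>C. b \<le> c)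
     \<and> (\<forall>b. (\<exists>g. g < b) \<and> (\<forall>g<b. \<exists>c\<in>C. g < c \<and> c < b) \<longrightarrow> b \<in> C)"

definition stationary :: "'a::wellorder set \<Rightarrow> bool" where
  "stationary S \<longleftrightarrow> (\<forall>C. club C \<longrightarrow> S \<inter> C \<noteq> {})"

definition stationary_below :: "'a::wellorder \<Rightarrow> 'a set \<Rightarrow> bool" where
  "stationary_below a S \<longleftrightarrow> (\<forall>C. club_below a C \<longrightarrow> S \<inter> C \<noteq> {})"

text \<open>cf(alpha) > omega: every countable subset of alpha is bounded below alpha
  (this fails for alpha = 0, for successors, and for limits of countable cofinality).\<close>
definition uncountable_cof :: "'a::wellorder \<Rightarrow> bool" where
  "uncountable_cof a \<longleftrightarrow> (\<forall>X. X \<subseteq> {x. x < a} \<and> countable X \<longrightarrow> (\<exists>g<a. \<forall>x\<in>X. x < g))"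

definition reflects_at :: "'a::wellorder set \<Rightarrow> 'a \<Rightarrow> bool" where
  "reflects_at S a \<longleftrightarrow> uncountable_cof a \<and> stationary_below a (S \<inter> {x. x < a})"

definition coherent_seq_fin :: "('a::wellorder \<Rightarrow> 'a set set) \<Rightarrow> bool" where
  "coherent_seq_fin \<C> \<longleftrightarrow>
     (\<forall>a. \<C> a \<noteq> {} \<and> finite (\<C> a) \<and> (\<forall>C\<in>\<C> a. club_below a C))
   \<and> (\<forall>a b. is_succ_of a b \<longrightarrow> \<C> a = {{b}})
   \<and> (\<forall>b. \<forall>C\<in>\<C> b. \<forall>a\<in>acc C. C \<inter> {x. x < a} \<in> \<C> a)"

definition is_thread :: "('a::wellorder \<Rightarrow> 'a set set) \<Rightarrow> 'a set \<Rightarrow> bool" where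
  "is_thread \<C> D \<longleftrightarrow> club D \<and> (\<forall>a\<in>acc D. D \<inter> {x. x < a} \<in> \<C> a)"

definition square_fin :: "'a::wellorder itself \<Rightarrow> bool" where
  "square_fin _ \<longleftrightarrow> (\<exists>\<C> :: 'a \<Rightarrow> 'a set set. coherent_seq_fin \<C> \<and> \<not> (\<exists>D. is_thread \<C> D))"

text \<open>Refl(<k, S) for a finite k: every collection of fewer than k stationary subsets of S
  reflects simultaneously.  Refl(2,S) = Refl(<3,S).\<close>
definition Refl_lt :: "nat \<Rightarrow> 'a::wellorder set \<Rightarrow> bool" where
  "Refl_lt k S \<longleftrightarrow> (\<forall>F. F \<subseteq> {T. T \<subseteq> S \<and> stationary T} \<and> finite F \<and> card F < k
      \<longrightarrow> (\<exists>a. \<forall>T\<in>F. reflects_at T a))"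

end

theory Submission
  imports Defs
begin
definition MT :: "nat \<Rightarrow> 'b set set \<Rightarrow> 'b set set" where
  "MT k E = {Y. finite Y \<and> card Y \<le> k \<and> (\<forall>e\<in>E. e \<inter> Y \<noteq> {}) \<and> (\<forall>y\<in>Y. \<exists>e\<in>E. e \<inter> Y = {y})}"

lemma MT_bound:
  assumes "\<forall>e\<in>E. finite e \<and> card e \<le> n" and "1 \<le> n"
  shows "finite (MT k E) \<and> card (MT k E) \<le> n ^ k"
  using assms(1)
proof (induction k arbitrary: E)
  case 0
  have "MT 0 E \<subseteq> {{}}" unfolding MT_def by auto
  then have "finite (MT 0 E)" "card (MT 0 E) \<le> 1" using card_mono[of "{{}}"] by (auto intro: finite_subset)
  then show ?case by simp
next
  case (Suc k)
  show ?case
  proof (cases "E = {}")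
    case True
    have "MT (Suc k) E \<subseteq> {{}}" unfolding MT_def using True by auto
    then have "finite (MT (Suc k) E)" "card (MT (Suc k) E) \<le> 1" using card_mono[of "{{}}"] by (auto intro: finite_subset)
    moreover have "1 \<le> n ^ Suc k" using assms(2) by simp
    ultimately show ?thesis by linarith
  next
    case False
    then obtain e0 where e0: "e0 \<in> E" by blast
    have fe0: "finite e0" "card e0 \<le> n" using Suc.prems e0 by auto
    define Ey where "Ey y = {e\<in>E. y \<notin> e}" for y
    have IH: "finite (MT k (Ey y)) \<and> card (MT k (Ey y)) \<le> n ^ k" for y
      using Suc.IH[of "Ey y"] Suc.prems unfolding Ey_def by auto
    have sub: "MT (Suc k) E \<subseteq> (\<Union>y\<in>e0. insert y ` MT k (Ey y))"
    proof
      fix Y assume Y: "Y \<in> MT (Suc k) E"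
      then have Yp: "finite Y" "card Y \<le> Suc k" "\<forall>e\<in>E. e \<inter> Y \<noteq> {}" "\<forall>y\<in>Y. \<exists>e\<in>E. e \<inter> Y = {y}"
        unfolding MT_def by auto
      then obtain y where y: "y \<in> e0" "y \<in> Y" using e0 by blast
      have "Y - {y} \<in> MT k (Ey y)" unfolding MT_def
      proof (intro CollectI conjI ballI)
        show "finite (Y - {y})" using Yp by simp
        show "card (Y - {y}) \<le> k" using Yp y by simp
        fix e assume "e \<in> Ey y"
        then show "e \<inter> (Y - {y}) \<noteq> {}" using Yp unfolding Ey_def by blast
      next
        fix z assume z: "z \<in> Y - {y}"
        then obtain e where e: "e \<in> E" "e \<inter> Y = {z}" using Yp by blast
        have "y \<notin> e"
        proof
          assume "y \<in> e"
          then have "y \<in> e \<inter> Y" using y by blast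
          then show False using e(2) z by auto
        qed
        then show "\<exists>e\<in>Ey y. e \<inter> (Y - {y}) = {z}" using e z unfolding Ey_def by blast
      qed
      moreover have "Y = insert y (Y - {y})" using y by blast
      ultimately show "Y \<in> (\<Union>y\<in>e0. insert y ` MT k (Ey y))" using y by blast
    qed
    have fin: "finite (\<Union>y\<in>e0. insert y ` MT k (Ey y))" using fe0 IH by blast
    have "card (\<Union>y\<in>e0. insert y ` MT k (Ey y)) \<le> (\<Sum>y\<in>e0. card (insert y ` MT k (Ey y)))"
      by (rule card_UN_le[OF fe0(1)])
    also have "\<dots> \<le> (\<Sum>y\<in>e0. n ^ k)"
    proof (rule sum_mono)
      fix y show "card (insert y ` MT k (Ey y)) \<le> n ^ k" using IH[of y] card_image_le[of "MT k (Ey y)" "insert y"] by linarith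
    qed
    also have "\<dots> = card e0 * n ^ k" by simp
    also have "\<dots> \<le> n ^ Suc k" using fe0(2) by simp
    finally have "card (\<Union>y\<in>e0. insert y ` MT k (Ey y)) \<le> n ^ Suc k" .
    then show ?thesis using sub fin card_mono[OF fin sub] finite_subset[OF sub fin] by linarith
  qed
qed

definition tr :: "('a::wellorder \<Rightarrow> 'a set set) \<Rightarrow> 'a \<Rightarrow> 'a \<Rightarrow> 'a set set" where
  "tr \<C> \<delta> \<alpha> = (\<lambda>D. D \<inter> {x. x < \<delta>}) ` \<C> \<alpha>"

definition restr :: "'a::wellorder \<Rightarrow> 'a set set \<Rightarrow> 'a set set" where
  "restr \<delta> Y = (\<lambda>y. y \<inter> {x. x < \<delta>}) ` Y"

definition hitd :: "('a::wellorder \<Rightarrow> 'a set set) \<Rightarrow> 'a set \<Rightarrow> 'a \<Rightarrow> 'a set set \<Rightarrow> bool" where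
  "hitd \<C> T \<delta> Y \<longleftrightarrow> \<not> stationary {\<alpha>\<in>T. \<delta> < \<alpha> \<and> tr \<C> \<delta> \<alpha> \<inter> Y = {}}"

definition Pos :: "('a::wellorder \<Rightarrow> 'a set set) \<Rightarrow> 'a \<Rightarrow> 'a set \<Rightarrow> 'a set set" where
  "Pos \<C> \<delta> T1 = {x. stationary {\<beta>\<in>T1. x \<in> tr \<C> \<delta> \<beta>}}"

lemma restr_restr: "\<delta> \<le> \<delta>' \<Longrightarrow> restr \<delta> (restr \<delta>' Y) = restr \<delta> Y"
  unfolding restr_def image_image by (rule image_cong) (auto dest: less_le_trans)

lemma tr_restr: "\<delta> \<le> \<delta>' \<Longrightarrow> y \<in> tr \<C> \<delta>' \<alpha> \<Longrightarrow> y \<inter> {x. x < \<delta>} \<in> tr \<C> \<delta> \<alpha>"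
proof -
  assume "\<delta> \<le> \<delta>'" "y \<in> tr \<C> \<delta>' \<alpha>"
  then obtain D where D: "D \<in> \<C> \<alpha>" "y = D \<inter> {x. x < \<delta>'}" unfolding tr_def by blast
  then have "y \<inter> {x. x < \<delta>} = D \<inter> {x. x < \<delta>}" using \<open>\<delta> \<le> \<delta>'\<close> by (auto dest: less_le_trans)
  then show ?thesis using D(1) unfolding tr_def by blast
qed

definition mh :: "('a::wellorder \<Rightarrow> 'a set set) \<Rightarrow> 'a set \<Rightarrow> 'a \<Rightarrow> nat" where
  "mh \<C> T \<delta> = (LEAST k. \<exists>Y. finite Y \<and> card Y = k \<and> hitd \<C> T \<delta> Y)"

definition MH :: "('a::wellorder \<Rightarrow> 'a set set) \<Rightarrow> 'a set \<Rightarrow> nat \<Rightarrow> 'a \<Rightarrow> 'a set set set" where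
  "MH \<C> T m \<delta> = {Y. finite Y \<and> card Y = m \<and> hitd \<C> T \<delta> Y}"

definition RR :: "('a::wellorder \<Rightarrow> 'a set set) \<Rightarrow> 'a set \<Rightarrow> nat \<Rightarrow> 'a \<Rightarrow> 'a \<Rightarrow> 'a set set set" where
  "RR \<C> T m \<rho> \<delta> = restr \<delta> ` MH \<C> T m \<rho>"

definition EE :: "('a::wellorder \<Rightarrow> 'a set set) \<Rightarrow> 'a set \<Rightarrow> nat \<Rightarrow> 'a \<Rightarrow> 'a set set set" where
  "EE \<C> T m \<delta> = (\<Inter>\<rho>\<in>{\<rho>. \<delta> \<le> \<rho>}. RR \<C> T m \<rho> \<delta>)"

definition XX :: "('a::wellorder \<Rightarrow> 'a set set) \<Rightarrow> 'a set \<Rightarrow> nat \<Rightarrow> 'a \<Rightarrow> 'a set set \<Rightarrow> 'a \<Rightarrow> 'a set set" where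
  "XX \<C> T m0 \<delta>2 Y0 \<delta> = (THE Y. Y \<in> EE \<C> T m0 \<delta> \<and> restr \<delta>2 Y = Y0)"

definition bzz :: "('a::wellorder \<Rightarrow> 'a set set) \<Rightarrow> 'a set \<Rightarrow> nat \<Rightarrow> 'a \<Rightarrow> 'a set set \<Rightarrow> 'a set \<Rightarrow> 'a \<Rightarrow> 'a set" where
  "bzz \<C> T m0 \<delta>2 Y0 z \<delta> = (THE y. y \<in> XX \<C> T m0 \<delta>2 Y0 \<delta> \<and> y \<inter> {x. x < \<delta>2} = z)"

definition BBB :: "('a::wellorder \<Rightarrow> 'a set set) \<Rightarrow> 'a set \<Rightarrow> nat \<Rightarrow> 'a \<Rightarrow> 'a set set \<Rightarrow> 'a set \<Rightarrow> 'a set" where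
  "BBB \<C> T m0 \<delta>2 Y0 z = {\<eta>. \<exists>\<delta>. \<delta>2 \<le> \<delta> \<and> \<eta> < \<delta> \<and> \<eta> \<in> bzz \<C> T m0 \<delta>2 Y0 z \<delta>}"

context
  assumes R: "regular_uncountable_cardinal_type TYPE('a::wellorder)"
begin
lemma unc: "uncountable (UNIV::'a set)" using R unfolding regular_uncountable_cardinal_type_def by blast

lemma small_bounded: "(card_of (X::'a set), card_of (UNIV :: 'a set)) \<in> ordLess \<Longrightarrow> \<exists>b. \<forall>x\<in>X. x < b"
  using R unfolding regular_uncountable_cardinal_type_def by blast

lemma init_small: "(card_of {x::'a. x < a}, card_of (UNIV :: 'a set)) \<in> ordLess"
  using R unfolding regular_uncountable_cardinal_type_def by blast

lemma countable_small: assumes "countable (X::'a set)"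
  shows "(card_of X, card_of (UNIV :: 'a set)) \<in> ordLess"
proof -
  have 1: "(card_of X, card_of (UNIV::nat set)) \<in> ordLeq"
    using assms unfolding countable_def card_of_ordLeq[symmetric] by blast
  have "(card_of (UNIV::'a set), card_of (UNIV::nat set)) \<notin> ordLeq"
  proof
    assume "(card_of (UNIV::'a set), card_of (UNIV::nat set)) \<in> ordLeq"
    then have "countable (UNIV::'a set)" unfolding countable_def card_of_ordLeq[symmetric] by blast
    with unc show False by blast
  qed
  then have "(card_of (UNIV::nat set), card_of (UNIV::'a set)) \<in> ordLess"
    using not_ordLeq_iff_ordLess[OF card_of_Well_order card_of_Well_order] by blast
  then show ?thesis using ordLeq_ordLess_trans[OF 1] by blast
qed

lemma countable_bounded: "countable (X::'a set) \<Longrightarrow> \<exists>b. \<forall>x\<in>X. x < b"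
  using countable_small small_bounded by blast

lemma image_init_bounded: "\<exists>b. \<forall>\<xi><a. f (\<xi>::'a) < (b::'a)"
proof -
  have "(card_of (f ` {x. x < a}), card_of {x::'a. x < a}) \<in> ordLeq" by (rule card_of_image)
  then have "(card_of (f ` {x. x < a}), card_of (UNIV::'a set)) \<in> ordLess"
    using init_small ordLeq_ordLess_trans by blast
  then obtain b where "\<forall>x\<in>f ` {x. x < a}. x < b" using small_bounded by blast
  then show ?thesis by blast
qed

lemma no_max: "\<exists>b. (a::'a) < b"
proof -
  obtain b where "\<forall>x\<in>{a}. x < b" using countable_bounded[of "{a}"] by blast
  then show ?thesis by blast
qed


lemma dep_seq:
  assumes "Q b" and "\<And>x. Q x \<Longrightarrow> \<exists>y. Q y \<and> P x y"
  shows "\<exists>s. s 0 = b \<and> (\<forall>k. Q (s k) \<and> P (s k) (s (Suc k)))"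
proof -
  define s where "s = rec_nat b (\<lambda>k x. SOME y. Q y \<and> P x y)"
  have s0: "s 0 = b" and sS: "\<And>k. s (Suc k) = (SOME y. Q y \<and> P (s k) y)" by (simp_all add: s_def)
  have Qs: "Q (s k)" for k
  proof (induction k)
    case 0 then show ?case using assms by (simp add: s0)
  next
    case (Suc k)
    then show ?case using someI_ex[OF assms(2)[of "s k"]] by (simp add: sS)
  qed
  have "\<forall>k. Q (s k) \<and> P (s k) (s (Suc k))"
  proof
    fix k
    have "Q (SOME y. Q y \<and> P (s k) y) \<and> P (s k) (SOME y. Q y \<and> P (s k) y)"
      by (rule someI_ex) (rule assms(2)[OF Qs])
    then show "Q (s k) \<and> P (s k) (s (Suc k))" using Qs by (simp add: sS)
  qed
  then show ?thesis using s0 by blast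
qed

lemma omega_sup:
  fixes s :: "nat \<Rightarrow> 'a"
  assumes inc: "\<And>k. s k < s (Suc k)"
  shows "\<exists>L. (\<forall>k. s k < L) \<and> (\<forall>g<L. \<exists>k. g < s k) \<and> (\<forall>u. (\<forall>k. s k < u) \<longrightarrow> L \<le> u)"
proof -
  obtain b where b: "\<forall>x\<in>range s. x < b" using countable_bounded[of "range s"] by auto
  define L where "L = (LEAST u. \<forall>k. s k < u)"
  have L1: "\<forall>k. s k < L" unfolding L_def by (rule LeastI[of _ b]) (use b in auto)
  have L3: "\<forall>u. (\<forall>k. s k < u) \<longrightarrow> L \<le> u" unfolding L_def by (auto intro: Least_le)
  have L2: "\<forall>g<L. \<exists>k. g < s k"
  proof (intro allI impI)
    fix g assume "g < L"
    then have "\<not> (\<forall>k. s k < g)" using L3 by (auto simp: not_le[symmetric])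
    then obtain k where "g \<le> s k" by (auto simp: not_less)
    then show "\<exists>k. g < s k" using inc[of k] by (meson order.strict_trans1)
  qed
  show ?thesis using L1 L2 L3 by blast
qed

lemma omega_sup_below:
  fixes s :: "nat \<Rightarrow> 'a"
  assumes inc: "\<And>k. s k < s (Suc k)" and uc: "uncountable_cof \<gamma>" and bd: "\<And>k. s k < \<gamma>"
  shows "\<exists>L. (\<forall>k. s k < L) \<and> (\<forall>g<L. \<exists>k. g < s k) \<and> L < \<gamma>"
proof -
  obtain L where L: "\<forall>k. s k < L" "\<forall>g<L. \<exists>k. g < s k" "\<forall>u. (\<forall>k. s k < u) \<longrightarrow> L \<le> u"
    using omega_sup[of s, OF inc] by blast
  obtain g where "g < \<gamma>" "\<forall>x\<in>range s. x < g"
  proof -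
    have "range s \<subseteq> {x. x < \<gamma>} \<and> countable (range s)" using bd by auto
    then show ?thesis using uc that unfolding uncountable_cof_def by blast
  qed
  then have "L < \<gamma>" using L(3) by (meson order.strict_trans1 rangeI)
  then show ?thesis using L by blast
qed

lemma mono_seq: "(\<And>k. s k < s (Suc k)) \<Longrightarrow> j \<le> i \<Longrightarrow> (s j :: 'a) \<le> s i"
  by (metis less_imp_le lift_Suc_mono_le)


lemma club_unb: "club C \<Longrightarrow> \<exists>c\<in>C. b \<le> c"
  unfolding club_def by blast

lemma club_closed: "club C \<Longrightarrow> g0 < b \<Longrightarrow> (\<forall>g<b. \<exists>c\<in>C. g < c \<and> c < b) \<Longrightarrow> b \<in> C"
  unfolding club_def by blast

lemma club_UNIV: "club (UNIV::'a set)"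
  unfolding club_def by auto

lemma diag_club:
  fixes E :: "'a \<Rightarrow> 'a set"
  assumes cl: "\<And>\<xi>. club (E \<xi>)"
  shows "club {\<beta>. \<forall>\<xi><\<beta>. \<beta> \<in> E \<xi>}"
proof -
  let ?D = "{\<beta>. \<forall>\<xi><\<beta>. \<beta> \<in> E \<xi>}"
  have step: "\<exists>y. True \<and> (x < y \<and> (\<forall>\<xi><x. \<exists>c\<in>E \<xi>. x \<le> c \<and> c < y))" for x
  proof -
    define f where "f \<xi> = (SOME c. c \<in> E \<xi> \<and> x \<le> c)" for \<xi>
    have f: "f \<xi> \<in> E \<xi> \<and> x \<le> f \<xi>" for \<xi>
      unfolding f_def by (rule someI_ex) (use club_unb[OF cl] in blast)
    obtain y0 where y0: "\<forall>\<xi><x. f \<xi> < y0" using image_init_bounded by blast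
    obtain y1 where y1: "x < y1" using no_max by blast
    show ?thesis
    proof (rule exI[of _ "max y0 y1"], intro conjI allI impI TrueI)
      show "x < max y0 y1" using y1 by (simp add: less_max_iff_disj)
      fix \<xi> assume "\<xi> < x"
      then have "f \<xi> < max y0 y1" using y0 by (simp add: less_max_iff_disj)
      then show "\<exists>c\<in>E \<xi>. x \<le> c \<and> c < max y0 y1" using f by blast
    qed
  qed
  have unb: "\<exists>c\<in>?D. b \<le> c" for b
  proof -
    obtain s where s0: "s 0 = b" and sS: "\<forall>k. s k < s (Suc k) \<and> (\<forall>\<xi><s k. \<exists>c\<in>E \<xi>. s k \<le> c \<and> c < s (Suc k))"
      using dep_seq[of "\<lambda>_. True" b "\<lambda>x y. x < y \<and> (\<forall>\<xi><x. \<exists>c\<in>E \<xi>. x \<le> c \<and> c < y)"] step by blast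
    have inc: "\<And>k. s k < s (Suc k)" using sS by blast
    obtain L where L1: "\<forall>k. s k < L" and L2: "\<forall>g<L. \<exists>k. g < s k"
      using omega_sup[of s, OF inc] by blast
    have "L \<in> ?D"
    proof (intro CollectI allI impI)
      fix \<xi> assume "\<xi> < L"
      then obtain k where k: "\<xi> < s k" using L2 by blast
      show "L \<in> E \<xi>"
      proof (rule club_closed[OF cl, of "s 0"])
        show "s 0 < L" using L1 by blast
        show "\<forall>g<L. \<exists>c\<in>E \<xi>. g < c \<and> c < L"
        proof (intro allI impI)
          fix g assume "g < L"
          then obtain j where j: "g < s j" using L2 by blast
          let ?i = "max j k"
          have "s j \<le> s ?i" "s k \<le> s ?i" using mono_seq[of s, OF inc] by auto
          then have "\<xi> < s ?i" "g < s ?i" using k j by auto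
          then obtain c where "c \<in> E \<xi>" "s ?i \<le> c" "c < s (Suc ?i)" using sS by blast
          moreover have "g < c" using \<open>g < s ?i\<close> \<open>s ?i \<le> c\<close> by (rule less_le_trans)
          moreover have "c < L" using \<open>c < s (Suc ?i)\<close> L1 by (meson less_trans)
          ultimately show "\<exists>c\<in>E \<xi>. g < c \<and> c < L" by blast
        qed
      qed
    qed
    moreover have "b \<le> L" using L1 s0 by (metis less_imp_le)
    ultimately show ?thesis by blast
  qed
  have clo: "b \<in> ?D" if hb: "g0 < b" "\<forall>g<b. \<exists>c\<in>?D. g < c \<and> c < b" for g0 b
  proof (intro CollectI allI impI)
    fix \<xi> assume "\<xi> < b"
    show "b \<in> E \<xi>"
    proof (rule club_closed[OF cl, of g0])
      show "g0 < b" by fact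
      show "\<forall>g<b. \<exists>c\<in>E \<xi>. g < c \<and> c < b"
      proof (intro allI impI)
        fix g assume "g < b"
        then have "max g \<xi> < b" using \<open>\<xi> < b\<close> by simp
        then obtain c where "c \<in> ?D" "max g \<xi> < c" "c < b" using hb(2) by blast
        then show "\<exists>c\<in>E \<xi>. g < c \<and> c < b" by auto
      qed
    qed
  qed
  show ?thesis unfolding club_def using unb clo by blast
qed

lemma club_Int: fixes A B :: "'a set" assumes "club A" "club B" shows "club (A \<inter> B)"
proof -
  obtain x0 x1 :: 'a where x01: "x0 < x1" using no_max by blast
  define E where "E \<xi> = (if \<xi> = x0 then A else B)" for \<xi>
  have "club (E \<xi>)" for \<xi> using assms unfolding E_def by simp
  then have D: "club {\<beta>. \<forall>\<xi><\<beta>. \<beta> \<in> E \<xi>}" by (rule diag_club)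
  have unb: "\<exists>c\<in>A \<inter> B. b \<le> c" for b
  proof -
    obtain y where y: "x1 < y" using no_max by blast
    obtain c where c: "c \<in> {\<beta>. \<forall>\<xi><\<beta>. \<beta> \<in> E \<xi>}" "max b y \<le> c" using club_unb[OF D] by blast
    then have "x0 < c" "x1 < c" using x01 y by auto
    moreover have "x1 \<noteq> x0" using x01 by simp
    ultimately have "c \<in> E x0" "c \<in> E x1" using c(1) by auto
    then have "c \<in> A" "c \<in> B" using \<open>x1 \<noteq> x0\<close> unfolding E_def by auto
    then show ?thesis using c by auto
  qed
  have clo: "\<forall>b. (\<exists>g. g < b) \<and> (\<forall>g<b. \<exists>c\<in>A \<inter> B. g < c \<and> c < b) \<longrightarrow> b \<in> A \<inter> B"
    using assms unfolding club_def by (meson IntD1 IntD2 IntI)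
  show ?thesis using unb clo unfolding club_def by blast
qed

lemma club_INT_nat: fixes E :: "nat \<Rightarrow> 'a set" assumes "\<And>k. club (E k)" shows "club (\<Inter>k. E k)"
proof -
  have "infinite (UNIV::'a set)" using unc countable_finite by blast
  then obtain e :: "nat \<Rightarrow> 'a" where e: "inj e" using infinite_countable_subset by blast
  define E' where "E' \<xi> = (if \<xi> \<in> range e then E (inv e \<xi>) else UNIV)" for \<xi>
  have "club (E' \<xi>)" for \<xi> using assms club_UNIV unfolding E'_def by simp
  then have D: "club {\<beta>. \<forall>\<xi><\<beta>. \<beta> \<in> E' \<xi>}" by (rule diag_club)
  obtain b0 where b0: "\<forall>x\<in>range e. x < b0" using countable_bounded[of "range e"] by auto
  have unb: "\<exists>c\<in>(\<Inter>k. E k). b \<le> c" for b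
  proof -
    obtain c where c: "c \<in> {\<beta>. \<forall>\<xi><\<beta>. \<beta> \<in> E' \<xi>}" "max b b0 \<le> c" using club_unb[OF D] by blast
    have "c \<in> E k" for k
    proof -
      have "e k < c" using b0 c(2) by (meson max.bounded_iff order.strict_trans2 rangeI)
      then have "c \<in> E' (e k)" using c(1) by blast
      then show ?thesis unfolding E'_def using e by simp
    qed
    then show ?thesis using c by auto
  qed
  have clo: "\<forall>b. (\<exists>g. g < b) \<and> (\<forall>g<b. \<exists>c\<in>(\<Inter>k. E k). g < c \<and> c < b) \<longrightarrow> b \<in> (\<Inter>k. E k)"
  proof (intro allI impI)
    fix b assume H: "(\<exists>g. g < b) \<and> (\<forall>g<b. \<exists>c\<in>(\<Inter>k. E k). g < c \<and> c < b)"
    show "b \<in> (\<Inter>k. E k)"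
    proof
      fix k
      have "\<forall>g<b. \<exists>c\<in>E k. g < c \<and> c < b" using H by blast
      then show "b \<in> E k" using H assms[of k] unfolding club_def by blast
    qed
  qed
  show ?thesis using unb clo unfolding club_def by blast
qed


lemma ns_iff: "\<not> stationary N \<longleftrightarrow> (\<exists>C. club C \<and> N \<inter> C = {})"
  unfolding stationary_def by blast

lemma ns_subset: "\<not> stationary N \<Longrightarrow> M \<subseteq> N \<Longrightarrow> \<not> stationary M"
  unfolding stationary_def by blast

lemma stat_mono: "stationary M \<Longrightarrow> M \<subseteq> N \<Longrightarrow> stationary N"
  unfolding stationary_def by blast

lemma ns_Un: fixes A B :: "'a set" assumes "\<not> stationary A" "\<not> stationary B" shows "\<not> stationary (A \<union> B)"
proof -
  obtain C1 C2 where "club C1" "A \<inter> C1 = {}" "club C2" "B \<inter> C2 = {}" using assms ns_iff by metis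
  then have "club (C1 \<inter> C2)" "(A \<union> B) \<inter> (C1 \<inter> C2) = {}" using club_Int by auto
  then show ?thesis using ns_iff by blast
qed

lemma ns_finite_UN: fixes A :: "'i \<Rightarrow> 'a set"
  assumes "finite I" "\<forall>i\<in>I. \<not> stationary (A i)" shows "\<not> stationary (\<Union>i\<in>I. A i)"
  using assms
proof (induction I rule: finite_induct)
  case empty then show ?case unfolding stationary_def using club_UNIV by auto
next
  case (insert x F) then show ?case using ns_Un by simp
qed

lemma ns_nat_UN: fixes A :: "nat \<Rightarrow> 'a set"
  assumes "\<forall>k. \<not> stationary (A k)" shows "\<not> stationary (\<Union>k. A k)"
proof -
  have "\<forall>k. \<exists>C. club C \<and> A k \<inter> C = {}" using assms ns_iff by blast
  then obtain C where C: "\<forall>k. club (C k) \<and> A k \<inter> C k = {}" by metis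
  then have "club (\<Inter>k. C k)" using club_INT_nat by blast
  moreover have "(\<Union>k. A k) \<inter> (\<Inter>k. C k) = {}" using C by blast
  ultimately show ?thesis using ns_iff by blast
qed

lemma ns_diag: fixes N :: "'a \<Rightarrow> 'a set"
  assumes "\<forall>\<delta>. \<not> stationary (N \<delta>)" shows "\<not> stationary {\<alpha>. \<exists>\<delta><\<alpha>. \<alpha> \<in> N \<delta>}"
proof -
  have "\<forall>\<delta>. \<exists>C. club C \<and> N \<delta> \<inter> C = {}" using assms ns_iff by blast
  then obtain C where C: "\<forall>\<delta>. club (C \<delta>) \<and> N \<delta> \<inter> C \<delta> = {}" by metis
  then have "club {\<beta>. \<forall>\<xi><\<beta>. \<beta> \<in> C \<xi>}" using diag_club by blast
  moreover have "{\<alpha>. \<exists>\<delta><\<alpha>. \<alpha> \<in> N \<delta>} \<inter> {\<beta>. \<forall>\<xi><\<beta>. \<beta> \<in> C \<xi>} = {}" using C by blast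
  ultimately show ?thesis using ns_iff by blast
qed

lemma club_tail: "club {\<alpha>::'a. b < \<alpha>}"
proof -
  have unb: "\<exists>c\<in>{\<alpha>. b < \<alpha>}. x \<le> c" for x
  proof -
    obtain y where "max x b < y" using no_max by blast
    then show ?thesis by (intro bexI[of _ y]) auto
  qed
  have clo: "\<forall>x. (\<exists>g. g < x) \<and> (\<forall>g<x. \<exists>c\<in>{\<alpha>. b < \<alpha>}. g < c \<and> c < x) \<longrightarrow> x \<in> {\<alpha>. b < \<alpha>}"
  proof (intro allI impI)
    fix x assume H: "(\<exists>g. g < x) \<and> (\<forall>g<x. \<exists>c\<in>{\<alpha>. b < \<alpha>}. g < c \<and> c < x)"
    then obtain g where "g < x" by blast
    then obtain c where "b < c" "c < x" using H by blast
    then show "x \<in> {\<alpha>. b < \<alpha>}" by simp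
  qed
  show ?thesis unfolding club_def using unb clo by blast
qed

lemma ns_bounded: "\<not> stationary {\<alpha>::'a. \<alpha> \<le> b}"
proof -
  have "{\<alpha>::'a. \<alpha> \<le> b} \<inter> {\<alpha>. b < \<alpha>} = {}" by auto
  then show ?thesis using club_tail ns_iff by blast
qed

lemma stat_diff: fixes T N :: "'a set" assumes "stationary T" "\<not> stationary N" shows "stationary (T - N)"
proof (rule ccontr)
  assume "\<not> stationary (T - N)"
  then have "\<not> stationary ((T - N) \<union> N)" using ns_Un assms(2) by blast
  moreover have "T \<subseteq> (T - N) \<union> N" by blast
  ultimately show False using assms(1) ns_subset by blast
qed

lemma stat_tail: "stationary T \<Longrightarrow> stationary {\<alpha>\<in>T. b < (\<alpha>::'a)}"
proof -
  assume "stationary T"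
  then have "stationary (T - {\<alpha>. \<alpha> \<le> b})" using stat_diff ns_bounded by blast
  moreover have "T - {\<alpha>. \<alpha> \<le> b} = {\<alpha>\<in>T. b < \<alpha>}" by auto
  ultimately show ?thesis by simp
qed

lemma stat_nonempty: "stationary (T::'a set) \<Longrightarrow> T \<noteq> {}"
  unfolding stationary_def using club_UNIV by blast

lemma stat_unb: "stationary T \<Longrightarrow> \<exists>\<alpha>\<in>T. b < (\<alpha>::'a)"
  using stat_tail stat_nonempty by blast

lemma stat_finite_UN: fixes A :: "'i \<Rightarrow> 'a set"
  assumes "finite I" "stationary (\<Union>i\<in>I. A i)" shows "\<exists>i\<in>I. stationary (A i)"
  using ns_finite_UN assms by blast

lemma stat_nat_UN: fixes A :: "nat \<Rightarrow> 'a set"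
  assumes "stationary (\<Union>k. A k)" shows "\<exists>k. stationary (A k)"
  using ns_nat_UN assms by blast

definition Lim :: "'a set" where
  "Lim = {\<beta>. (\<exists>g. g < \<beta>) \<and> (\<forall>g<\<beta>. \<exists>e. g < e \<and> e < \<beta>)}"

lemma club_Lim: "club Lim"
proof -
  have unb: "\<exists>c\<in>Lim. b \<le> c" for b
  proof -
    obtain s where s0: "s 0 = b" and sS: "\<forall>k. True \<and> s k < s (Suc k)"
      using dep_seq[of "\<lambda>_. True" b "\<lambda>x y. x < y"] no_max by blast
    have inc: "\<And>k. s k < s (Suc k)" using sS by blast
    obtain L where L1: "\<forall>k. s k < L" and L2: "\<forall>g<L. \<exists>k. g < s k"
      using omega_sup[of s, OF inc] by blast
    have "L \<in> Lim" unfolding Lim_def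
    proof (intro CollectI conjI allI impI)
      show "\<exists>g. g < L" using L1 by blast
      fix g assume "g < L"
      then obtain k where "g < s k" using L2 by blast
      then show "\<exists>e. g < e \<and> e < L" using L1 by blast
    qed
    moreover have "b \<le> L" using L1 s0 by (metis less_imp_le)
    ultimately show ?thesis by blast
  qed
  have clo: "\<forall>x. (\<exists>g. g < x) \<and> (\<forall>g<x. \<exists>c\<in>Lim. g < c \<and> c < x) \<longrightarrow> x \<in> Lim"
    unfolding Lim_def by blast
  show ?thesis unfolding club_def using unb clo by blast
qed


lemma between_below: "uncountable_cof \<gamma> \<Longrightarrow> x < \<gamma> \<Longrightarrow> \<exists>g. x < g \<and> g < (\<gamma>::'a)"
proof -
  assume uc: "uncountable_cof \<gamma>" and "x < \<gamma>"
  then have "{x} \<subseteq> {y. y < \<gamma>} \<and> countable {x}" by simp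
  then obtain g where "g < \<gamma>" "\<forall>y\<in>{x}. y < g" using uc[unfolded uncountable_cof_def, rule_format, of "{x}"] by blast
  then show ?thesis by blast
qed

lemma acc_club_below:
  fixes C :: "'a set"
  assumes uc: "uncountable_cof \<gamma>" and cb: "club_below \<gamma> C" and xi: "\<xi> < \<gamma>"
  shows "club_below \<gamma> {a\<in>acc C. \<xi> < a \<and> a < \<gamma>}"
proof -
  let ?A = "{a\<in>acc C. \<xi> < a \<and> a < \<gamma>}"
  have Csub: "C \<subseteq> {x. x < \<gamma>}" and Cunb: "\<forall>b<\<gamma>. \<exists>c\<in>C. b \<le> c" using cb unfolding club_below_def by blast+
  have unb: "\<exists>c\<in>?A. b \<le> c" if "b < \<gamma>" for b
  proof -
    have "max b \<xi> < \<gamma>" using that xi by simp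
    then obtain c0 where c0: "c0 \<in> C" "max b \<xi> \<le> c0" using Cunb by blast
    have step: "\<exists>y. (y \<in> C) \<and> x < y" if "x \<in> C" for x
    proof -
      have "x < \<gamma>" using that Csub by blast
      then obtain g where "x < g" "g < \<gamma>" using between_below[OF uc] by blast
      then obtain y where "y \<in> C" "g \<le> y" using Cunb by blast
      then show ?thesis using less_le_trans[OF \<open>x < g\<close>] by blast
    qed
    obtain s where s0: "s 0 = c0" and sS: "\<forall>k. s k \<in> C \<and> s k < s (Suc k)"
      using dep_seq[of "\<lambda>y. y \<in> C" c0 "\<lambda>x y. x < y"] step c0(1) by blast
    have inc: "\<And>k. s k < s (Suc k)" using sS by blast
    have bd: "\<And>k. s k < \<gamma>" using sS Csub by blast
    obtain L where L1: "\<forall>k. s k < L" and L2: "\<forall>g<L. \<exists>k. g < s k" and L3: "L < \<gamma>"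
      using omega_sup_below[of s, OF inc uc bd] by blast
    have "L \<in> acc C" unfolding acc_def
    proof (intro CollectI conjI allI impI)
      show "\<exists>a\<in>C. L \<le> a" using Cunb L3 by blast
      fix g assume "g < L"
      then obtain k where "g < s k" using L2 by blast
      then have "g < s (Suc k)" using inc[of k] by (rule less_trans)
      then show "\<exists>a\<in>C. g < a \<and> a < L" using sS L1 by blast
    qed
    have "c0 < L" using L1 s0 by metis
    moreover have "b \<le> c0" "\<xi> \<le> c0" using c0(2) by simp_all
    ultimately have "\<xi> < L" "b \<le> L" using le_less_trans less_imp_le by blast+
    with \<open>L \<in> acc C\<close> show ?thesis using L3 by blast
  qed
  have clo: "b \<in> ?A" if hb: "b < \<gamma>" "\<exists>g. g < b" "\<forall>g<b. \<exists>c\<in>?A. g < c \<and> c < b" for b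
  proof -
    have "b \<in> acc C" unfolding acc_def
    proof (intro CollectI conjI allI impI)
      show "\<exists>a\<in>C. b \<le> a" using Cunb hb(1) by blast
      fix g assume "g < b"
      then obtain c where c: "c \<in> acc C" "g < c" "c < b" using hb(3) by blast
      then obtain a where "a \<in> C" "g < a" "a < c" unfolding acc_def by blast
      then show "\<exists>a\<in>C. g < a \<and> a < b" using c(3) by (meson less_trans)
    qed
    moreover obtain g0 where "g0 < b" using hb(2) by blast
    then obtain c where "c \<in> ?A" "g0 < c" "c < b" using hb(3) by blast
    then have "\<xi> < b" by auto
    ultimately show ?thesis using hb(1) by blast
  qed
  show ?thesis unfolding club_below_def using unb clo by blast
qed

lemma coh_club: "coherent_seq_fin \<C> \<Longrightarrow> C \<in> \<C> a \<Longrightarrow> club_below a C"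
  unfolding coherent_seq_fin_def by (drule conjunct1) blast

lemma coh_fin: "coherent_seq_fin \<C> \<Longrightarrow> finite (\<C> a) \<and> \<C> a \<noteq> {}"
  unfolding coherent_seq_fin_def by (drule conjunct1) blast

lemma coh_acc: "coherent_seq_fin \<C> \<Longrightarrow> C \<in> \<C> b \<Longrightarrow> a \<in> acc C \<Longrightarrow> C \<inter> {x. x < a} \<in> \<C> a"
  unfolding coherent_seq_fin_def by (drule conjunct2, drule conjunct2) blast

lemma refl_pair:
  fixes \<C> :: "'a \<Rightarrow> 'a set set"
  assumes coh: "coherent_seq_fin \<C>" and r0: "reflects_at T0 \<gamma>" and r1: "reflects_at T1 \<gamma>"
    and C: "C \<in> \<C> \<gamma>"
  shows "\<exists>\<alpha>0\<in>T0. \<exists>\<alpha>1\<in>T1. \<alpha>0 < \<alpha>1 \<and> C \<inter> {x. x < \<alpha>0} \<in> \<C> \<alpha>0 \<and> C \<inter> {x. x < \<alpha>1} \<in> \<C> \<alpha>1"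
proof -
  have uc: "uncountable_cof \<gamma>" using r0 unfolding reflects_at_def by (rule conjunct1)
  have st0: "stationary_below \<gamma> (T0 \<inter> {x. x < \<gamma>})"
    using r0 unfolding reflects_at_def by (rule conjunct2)
  have st1: "stationary_below \<gamma> (T1 \<inter> {x. x < \<gamma>})"
    using r1 unfolding reflects_at_def by (rule conjunct2)
  have cb: "club_below \<gamma> C" using coh_club[OF coh C] .
  have cohr: "\<And>a. a \<in> acc C \<Longrightarrow> C \<inter> {x. x < a} \<in> \<C> a" using coh_acc[OF coh C] .
  obtain g0 where "g0 < \<gamma>"
  proof -
    have "{} \<subseteq> {x. x < \<gamma>} \<and> countable {}" by simp
    then show ?thesis using uc[unfolded uncountable_cof_def, rule_format, of "{}"] that by blast
  qed
  then have "club_below \<gamma> {a\<in>acc C. g0 < a \<and> a < \<gamma>}" using acc_club_below[OF uc cb] by blast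
  then obtain \<alpha>0 where a0: "\<alpha>0 \<in> T0" "\<alpha>0 \<in> acc C" "\<alpha>0 < \<gamma>"
    using st0 unfolding stationary_below_def by blast
  then have "club_below \<gamma> {a\<in>acc C. \<alpha>0 < a \<and> a < \<gamma>}" using acc_club_below[OF uc cb] by blast
  then obtain \<alpha>1 where a1: "\<alpha>1 \<in> T1" "\<alpha>1 \<in> acc C" "\<alpha>0 < \<alpha>1"
    using st1 unfolding stationary_below_def by blast
  show ?thesis using a0 a1 cohr by blast
qed

lemma thread_of_unb:
  fixes \<C> :: "'a \<Rightarrow> 'a set set"
  assumes coh: "coherent_seq_fin \<C>" and U: "\<forall>b. \<exists>\<alpha>\<in>U. b < \<alpha>"
    and D: "\<forall>\<alpha>\<in>U. D \<inter> {x. x < \<alpha>} \<in> \<C> \<alpha>"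
  shows "is_thread \<C> D"
proof -
  have cb: "\<And>\<alpha>. \<alpha> \<in> U \<Longrightarrow> club_below \<alpha> (D \<inter> {x. x < \<alpha>})"
    using coh_club[OF coh] D by blast
  have unb: "\<exists>c\<in>D. b \<le> c" for b
  proof -
    obtain \<alpha> where "\<alpha> \<in> U" "b < \<alpha>" using U by blast
    then show ?thesis using cb[of \<alpha>] unfolding club_below_def by blast
  qed
  have clo: "b \<in> D" if hb: "\<exists>g. g < b" "\<forall>g<b. \<exists>c\<in>D. g < c \<and> c < b" for b
  proof -
    obtain \<alpha> where a: "\<alpha> \<in> U" "b < \<alpha>" using U by blast
    have "\<forall>g<b. \<exists>c\<in>D \<inter> {x. x < \<alpha>}. g < c \<and> c < b"
    proof (intro allI impI)
      fix g assume "g < b"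
      then obtain c where "c \<in> D" "g < c" "c < b" using hb(2) by blast
      moreover have "c < \<alpha>" using \<open>c < b\<close> a(2) by (rule less_trans)
      ultimately show "\<exists>c\<in>D \<inter> {x. x < \<alpha>}. g < c \<and> c < b" by blast
    qed
    then have "b \<in> D \<inter> {x. x < \<alpha>}" using cb[OF a(1)] a(2) hb(1) unfolding club_below_def by blast
    then show ?thesis by blast
  qed
  have co: "D \<inter> {x. x < a} \<in> \<C> a" if aD: "a \<in> acc D" for a
  proof -
    obtain c where c: "c \<in> D" "a \<le> c" using aD unfolding acc_def by blast
    obtain \<alpha> where al: "\<alpha> \<in> U" "c < \<alpha>" using U by blast
    let ?E = "D \<inter> {x. x < \<alpha>}"
    have E: "?E \<in> \<C> \<alpha>" using D al by blast
    have "a \<in> acc ?E" unfolding acc_def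
    proof (intro CollectI conjI allI impI)
      show "\<exists>e\<in>?E. a \<le> e" using c al by blast
      fix g assume "g < a"
      then obtain e where "e \<in> D" "g < e" "e < a" using aD unfolding acc_def by blast
      moreover have "e < \<alpha>" using \<open>e < a\<close> c(2) al(2) by (meson less_le_trans less_trans)
      ultimately show "\<exists>e\<in>?E. g < e \<and> e < a" by blast
    qed
    then have "?E \<inter> {x. x < a} \<in> \<C> a" using coh_acc[OF coh E] by blast
    moreover have "a < \<alpha>" using c(2) al(2) by (rule le_less_trans)
    then have "?E \<inter> {x. x < a} = D \<inter> {x. x < a}" by (auto dest: less_trans)
    ultimately show ?thesis by simp
  qed
  show ?thesis unfolding is_thread_def club_def using unb clo co by blast
qed


context
  fixes \<C> :: "'a \<Rightarrow> 'a set set" and S T :: "'a set" and n :: nat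
  assumes coh: "coherent_seq_fin \<C>" and nothr: "\<not> (\<exists>D. is_thread \<C> D)"
    and refl: "Refl_lt 3 S" and TS: "T \<subseteq> S" and Tst: "stationary T"
    and Tn: "\<forall>\<alpha>\<in>T. card (\<C> \<alpha>) \<le> n"
begin

lemma tr_finite: "finite (tr \<C> \<delta> \<alpha>)"
  unfolding tr_def using coh_fin[OF coh] by blast

lemma tr_card: "\<alpha> \<in> T \<Longrightarrow> card (tr \<C> \<delta> \<alpha>) \<le> n"
proof -
  assume "\<alpha> \<in> T"
  then have "card (\<C> \<alpha>) \<le> n" using Tn by blast
  moreover have "card (tr \<C> \<delta> \<alpha>) \<le> card (\<C> \<alpha>)" unfolding tr_def
    by (rule card_image_le) (use coh_fin[OF coh] in blast)
  ultimately show ?thesis by linarith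
qed

lemma n_pos: "1 \<le> n"
proof -
  obtain \<alpha> where "\<alpha> \<in> T" using stat_nonempty[OF Tst] by blast
  moreover have "finite (\<C> \<alpha>)" "\<C> \<alpha> \<noteq> {}" using coh_fin[OF coh] by blast+
  ultimately have "0 < card (\<C> \<alpha>)" "card (\<C> \<alpha>) \<le> n" using Tn card_gt_0_iff by blast+
  then show ?thesis by linarith
qed

lemma split_contra:
  assumes S0: "T0 \<subseteq> S" and S1: "T1 \<subseteq> S" and st0: "stationary T0" and st1: "stationary T1"
    and tail: "T0 \<subseteq> {\<alpha>. \<delta> < \<alpha>}"
    and disj: "\<forall>\<alpha>\<in>T0. \<forall>\<beta>\<in>T1. \<alpha> < \<beta> \<longrightarrow> tr \<C> \<delta> \<alpha> \<inter> tr \<C> \<delta> \<beta> = {}"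
  shows False
proof -
  have fam: "{T0, T1} \<subseteq> {T. T \<subseteq> S \<and> stationary T}" using S0 S1 st0 st1 by blast
  have c2: "card {T0, T1} < 3" by (simp add: card_insert_if)
  have "\<forall>F. F \<subseteq> {T. T \<subseteq> S \<and> stationary T} \<and> finite F \<and> card F < 3 \<longrightarrow> (\<exists>a. \<forall>T\<in>F. reflects_at T a)"
    using refl unfolding Refl_lt_def .
  then have "\<exists>a. \<forall>T\<in>{T0, T1}. reflects_at T a" using fam c2 by blast
  then obtain a where "\<forall>T\<in>{T0, T1}. reflects_at T a" by blast
  then have r0: "reflects_at T0 a" and r1: "reflects_at T1 a" by auto
  obtain C where C: "C \<in> \<C> a" using coh_fin[OF coh] by blast
  obtain \<alpha>0 \<alpha>1 where a: "\<alpha>0 \<in> T0" "\<alpha>1 \<in> T1" "\<alpha>0 < \<alpha>1"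
    "C \<inter> {x. x < \<alpha>0} \<in> \<C> \<alpha>0" "C \<inter> {x. x < \<alpha>1} \<in> \<C> \<alpha>1"
    using refl_pair[OF coh r0 r1 C] by blast
  have d0: "\<delta> < \<alpha>0" using tail a(1) by blast
  then have d1: "\<delta> < \<alpha>1" using a(3) by (rule less_trans)
  have e0: "C \<inter> {x. x < \<delta>} = (\<lambda>D. D \<inter> {x. x < \<delta>}) (C \<inter> {x. x < \<alpha>0})" using d0 by (auto dest: less_trans)
  have "C \<inter> {x. x < \<delta>} \<in> tr \<C> \<delta> \<alpha>0" unfolding tr_def using image_eqI[of _ "\<lambda>D. D \<inter> {x. x < \<delta>}", OF e0 a(4)] .
  moreover have e1: "C \<inter> {x. x < \<delta>} = (\<lambda>D. D \<inter> {x. x < \<delta>}) (C \<inter> {x. x < \<alpha>1})" using d1 by (auto dest: less_trans)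
  have "C \<inter> {x. x < \<delta>} \<in> tr \<C> \<delta> \<alpha>1" unfolding tr_def using image_eqI[of _ "\<lambda>D. D \<inter> {x. x < \<delta>}", OF e1 a(5)] .
  ultimately show False using disj a(1,2,3) by blast
qed

lemma star:
  assumes T0: "T0 \<subseteq> T" "stationary T0" and T1: "T1 \<subseteq> T" "stationary T1"
  shows "\<exists>\<alpha>\<in>T0. \<delta> < \<alpha> \<and> (\<exists>x\<in>tr \<C> \<delta> \<alpha>. stationary {\<beta>\<in>T1. x \<in> tr \<C> \<delta> \<beta>})"
proof (rule ccontr)
  assume "\<not> ?thesis"
  then have H: "\<forall>\<alpha>\<in>T0. \<delta> < \<alpha> \<longrightarrow> (\<forall>x\<in>tr \<C> \<delta> \<alpha>. \<not> stationary {\<beta>\<in>T1. x \<in> tr \<C> \<delta> \<beta>})" by blast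
  define Z where "Z \<alpha> = (if \<alpha> \<in> T0 \<and> \<delta> < \<alpha> then (\<Union>x\<in>tr \<C> \<delta> \<alpha>. {\<beta>\<in>T1. x \<in> tr \<C> \<delta> \<beta>}) else {})" for \<alpha>
  have nsZ: "\<forall>\<alpha>. \<not> stationary (Z \<alpha>)"
  proof
    fix \<alpha>
    show "\<not> stationary (Z \<alpha>)"
    proof (cases "\<alpha> \<in> T0 \<and> \<delta> < \<alpha>")
      case True
      have "\<forall>x\<in>tr \<C> \<delta> \<alpha>. \<not> stationary {\<beta>\<in>T1. x \<in> tr \<C> \<delta> \<beta>}" using H True by blast
      then have "\<not> stationary (\<Union>x\<in>tr \<C> \<delta> \<alpha>. {\<beta>\<in>T1. x \<in> tr \<C> \<delta> \<beta>})"
        by (rule ns_finite_UN[OF tr_finite])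
      moreover have "Z \<alpha> = (\<Union>x\<in>tr \<C> \<delta> \<alpha>. {\<beta>\<in>T1. x \<in> tr \<C> \<delta> \<beta>})" unfolding Z_def using True by (rule if_P)
      ultimately show ?thesis by simp
    next
      case False
      then have "Z \<alpha> = {}" unfolding Z_def by (rule if_not_P)
      then show ?thesis using stat_nonempty by blast
    qed
  qed
  define T1' where "T1' = {\<beta>\<in>T1. \<delta> < \<beta>} - {\<alpha>. \<exists>\<xi><\<alpha>. \<alpha> \<in> Z \<xi>}"
  have st1': "stationary T1'" unfolding T1'_def
    using stat_diff[OF stat_tail[OF T1(2)] ns_diag[OF nsZ]] .
  define T0' where "T0' = {\<alpha>\<in>T0. \<delta> < \<alpha>}"
  have st0': "stationary T0'" unfolding T0'_def using stat_tail[OF T0(2)] .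
  show False
  proof (rule split_contra[of T0' T1' \<delta>])
    show "T0' \<subseteq> S" "T1' \<subseteq> S" using T0 T1 TS unfolding T0'_def T1'_def by auto
    show "stationary T0'" "stationary T1'" by fact+
    show "T0' \<subseteq> {\<alpha>. \<delta> < \<alpha>}" unfolding T0'_def by auto
    show "\<forall>\<alpha>\<in>T0'. \<forall>\<beta>\<in>T1'. \<alpha> < \<beta> \<longrightarrow> tr \<C> \<delta> \<alpha> \<inter> tr \<C> \<delta> \<beta> = {}"
    proof (intro ballI impI)
      fix \<alpha> \<beta> assume a: "\<alpha> \<in> T0'" and b: "\<beta> \<in> T1'" and ab: "\<alpha> < \<beta>"
      have "\<beta> \<notin> Z \<alpha>" using b ab unfolding T1'_def by blast
      then show "tr \<C> \<delta> \<alpha> \<inter> tr \<C> \<delta> \<beta> = {}" using a b unfolding Z_def T0'_def T1'_def by auto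
    qed
  qed
qed

lemma pos_hit: "T1 \<subseteq> T \<Longrightarrow> stationary T1 \<Longrightarrow> hitd \<C> T \<delta> (Pos \<C> \<delta> T1)"
proof (rule ccontr)
  assume T1: "T1 \<subseteq> T" "stationary T1" and "\<not> hitd \<C> T \<delta> (Pos \<C> \<delta> T1)"
  then have st: "stationary {\<alpha>\<in>T. \<delta> < \<alpha> \<and> tr \<C> \<delta> \<alpha> \<inter> Pos \<C> \<delta> T1 = {}}" unfolding hitd_def by blast
  obtain \<alpha> x where "\<alpha> \<in> {\<alpha>\<in>T. \<delta> < \<alpha> \<and> tr \<C> \<delta> \<alpha> \<inter> Pos \<C> \<delta> T1 = {}}" "x \<in> tr \<C> \<delta> \<alpha>"
    "stationary {\<beta>\<in>T1. x \<in> tr \<C> \<delta> \<beta>}"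
    using star[OF _ st T1, of \<delta>] by blast
  then show False unfolding Pos_def by blast
qed

lemma hit_mono: "hitd \<C> T \<delta> Y \<Longrightarrow> Y \<subseteq> Y' \<Longrightarrow> hitd \<C> T \<delta> Y'"
  unfolding hitd_def by (erule ns_subset) blast

lemma small_hit: "\<exists>Y. finite Y \<and> card Y \<le> n \<and> hitd \<C> T \<delta> Y"
proof -
  define P where "P = {(T1, X). T1 \<subseteq> T \<and> stationary T1 \<and> T1 \<subseteq> {\<alpha>. \<delta> < \<alpha>} \<and> (\<forall>\<alpha>\<in>T1. X \<subseteq> tr \<C> \<delta> \<alpha>)}"
  have bnd: "finite X \<and> card X \<le> n" if TX: "(T1, X) \<in> P" for T1 X
  proof -
    have "T1 \<noteq> {}" using TX stat_nonempty unfolding P_def by blast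
    then obtain \<alpha> where "\<alpha> \<in> T1" by blast
    then have X: "X \<subseteq> tr \<C> \<delta> \<alpha>" "\<alpha> \<in> T" using TX unfolding P_def by blast+
    have "finite X" using finite_subset[OF X(1) tr_finite] .
    moreover have "card X \<le> card (tr \<C> \<delta> \<alpha>)" using card_mono[OF tr_finite X(1)] .
    ultimately show ?thesis using tr_card[OF X(2), of \<delta>] by linarith
  qed
  define K where "K = (\<lambda>p. card (snd p)) ` P"
  have "K \<subseteq> {0..n}" unfolding K_def using bnd by auto
  then have finK: "finite K" using finite_subset by blast
  have "({\<alpha>\<in>T. \<delta> < \<alpha>}, {}) \<in> P" unfolding P_def using stat_tail[OF Tst] by auto
  then have "K \<noteq> {}" unfolding K_def by blast
  then have "Max K \<in> K" using finK by simp
  then obtain T1 X where p: "(T1, X) \<in> P" "card X = Max K" unfolding K_def by auto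
  show ?thesis
  proof (cases "Pos \<C> \<delta> T1 \<subseteq> X")
    case True
    have "hitd \<C> T \<delta> (Pos \<C> \<delta> T1)" using p(1) pos_hit unfolding P_def by blast
    then have "hitd \<C> T \<delta> X" using True hit_mono by blast
    then show ?thesis using bnd[OF p(1)] by blast
  next
    case False
    then obtain y where y: "y \<in> Pos \<C> \<delta> T1" "y \<notin> X" by blast
    define T2 where "T2 = {\<beta>\<in>T1. y \<in> tr \<C> \<delta> \<beta>}"
    have "stationary T2" using y(1) unfolding T2_def Pos_def by blast
    then have "(T2, insert y X) \<in> P" using p(1) unfolding P_def T2_def by auto
    then have "card (insert y X) \<in> K" unfolding K_def by force
    then have "card (insert y X) \<le> Max K" using finK by simp
    moreover have "card (insert y X) = Suc (card X)" using y(2) bnd[OF p(1)] by simp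
    ultimately show ?thesis using p(2) by simp
  qed
qed


lemma mh_ex: "\<exists>Y. finite Y \<and> card Y = mh \<C> T \<delta> \<and> hitd \<C> T \<delta> Y"
proof -
  obtain Y where "finite Y" "card Y \<le> n" "hitd \<C> T \<delta> Y" using small_hit by blast
  then have "\<exists>k Y. finite Y \<and> card Y = k \<and> hitd \<C> T \<delta> Y" by blast
  then show ?thesis unfolding mh_def by (rule LeastI_ex)
qed

lemma mh_le: "finite Y \<Longrightarrow> hitd \<C> T \<delta> Y \<Longrightarrow> mh \<C> T \<delta> \<le> card Y"
  unfolding mh_def by (rule Least_le) blast

lemma mh_n: "mh \<C> T \<delta> \<le> n"
proof -
  obtain Y where "finite Y" "card Y \<le> n" "hitd \<C> T \<delta> Y" using small_hit by blast
  then show ?thesis using mh_le le_trans by blast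
qed

lemma hit_restr:
  assumes dd: "\<delta> \<le> \<delta>'" and h: "hitd \<C> T \<delta>' Y"
  shows "hitd \<C> T \<delta> (restr \<delta> Y)"
proof -
  have sub: "{\<alpha>\<in>T. \<delta> < \<alpha> \<and> tr \<C> \<delta> \<alpha> \<inter> restr \<delta> Y = {}}
      \<subseteq> {\<alpha>\<in>T. \<delta>' < \<alpha> \<and> tr \<C> \<delta>' \<alpha> \<inter> Y = {}} \<union> {\<alpha>. \<alpha> \<le> \<delta>'}"
  proof
    fix \<alpha> assume a: "\<alpha> \<in> {\<alpha>\<in>T. \<delta> < \<alpha> \<and> tr \<C> \<delta> \<alpha> \<inter> restr \<delta> Y = {}}"
    show "\<alpha> \<in> {\<alpha>\<in>T. \<delta>' < \<alpha> \<and> tr \<C> \<delta>' \<alpha> \<inter> Y = {}} \<union> {\<alpha>. \<alpha> \<le> \<delta>'}"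
    proof (cases "\<alpha> \<le> \<delta>'")
      case True then show ?thesis by blast
    next
      case False
      have "tr \<C> \<delta>' \<alpha> \<inter> Y = {}"
      proof (rule ccontr)
        assume "tr \<C> \<delta>' \<alpha> \<inter> Y \<noteq> {}"
        then obtain y where y: "y \<in> tr \<C> \<delta>' \<alpha>" "y \<in> Y" by blast
        have "y \<inter> {x. x < \<delta>} \<in> tr \<C> \<delta> \<alpha>" using tr_restr[OF dd y(1)] .
        moreover have "y \<inter> {x. x < \<delta>} \<in> restr \<delta> Y" unfolding restr_def using y(2) by blast
        ultimately show False using a by blast
      qed
      then show ?thesis using a False by auto
    qed
  qed
  have "\<not> stationary ({\<alpha>\<in>T. \<delta>' < \<alpha> \<and> tr \<C> \<delta>' \<alpha> \<inter> Y = {}} \<union> {\<alpha>. \<alpha> \<le> \<delta>'})"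
    using ns_Un h ns_bounded unfolding hitd_def by blast
  then show ?thesis unfolding hitd_def using ns_subset[OF _ sub] by blast
qed

lemma restr_finite: "finite Y \<Longrightarrow> finite (restr \<delta> Y)"
  unfolding restr_def by simp

lemma restr_card: "finite Y \<Longrightarrow> card (restr \<delta> Y) \<le> card Y"
  unfolding restr_def by (rule card_image_le)

lemma mh_mono: "\<delta> \<le> \<delta>' \<Longrightarrow> mh \<C> T \<delta> \<le> mh \<C> T \<delta>'"
proof -
  assume dd: "\<delta> \<le> \<delta>'"
  obtain Y where Y: "finite Y" "card Y = mh \<C> T \<delta>'" "hitd \<C> T \<delta>' Y" using mh_ex by blast
  have "mh \<C> T \<delta> \<le> card (restr \<delta> Y)" using mh_le[OF restr_finite[OF Y(1)] hit_restr[OF dd Y(3)]] .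
  also have "\<dots> \<le> card Y" using restr_card[OF Y(1)] .
  finally show ?thesis using Y(2) by simp
qed

lemma mh_event: "\<exists>\<delta>1. \<forall>\<delta>. \<delta>1 \<le> \<delta> \<longrightarrow> mh \<C> T \<delta> = mh \<C> T \<delta>1"
proof -
  have "range (mh \<C> T) \<subseteq> {0..n}" using mh_n by auto
  then have fin: "finite (range (mh \<C> T))" using finite_subset by blast
  then have "Max (range (mh \<C> T)) \<in> range (mh \<C> T)" by simp
  then obtain \<delta>1 where d1: "Max (range (mh \<C> T)) = mh \<C> T \<delta>1" by (rule rangeE)
  have "mh \<C> T \<delta> = mh \<C> T \<delta>1" if "\<delta>1 \<le> \<delta>" for \<delta>
  proof -
    have "mh \<C> T \<delta>1 \<le> mh \<C> T \<delta>" using mh_mono[OF that] .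
    moreover have "mh \<C> T \<delta> \<le> mh \<C> T \<delta>1" unfolding d1[symmetric] using fin by simp
    ultimately show ?thesis by simp
  qed
  then show ?thesis by blast
qed


context
  fixes \<delta>1 :: 'a and m0 :: nat
  assumes d1: "\<forall>\<delta>. \<delta>1 \<le> \<delta> \<longrightarrow> mh \<C> T \<delta> = m0"
begin

lemma crit:
  assumes dd: "\<delta>1 \<le> \<delta>" and Y: "Y \<in> MH \<C> T m0 \<delta>" and y: "y \<in> Y"
  shows "stationary {\<alpha>\<in>T. \<delta> < \<alpha> \<and> tr \<C> \<delta> \<alpha> \<inter> Y = {y}}"
proof -
  have Yp: "finite Y" "card Y = m0" "hitd \<C> T \<delta> Y" using Y unfolding MH_def by blast+
  have "\<not> hitd \<C> T \<delta> (Y - {y})"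
  proof
    assume "hitd \<C> T \<delta> (Y - {y})"
    then have "mh \<C> T \<delta> \<le> card (Y - {y})" using mh_le Yp(1) by blast
    moreover have "card (Y - {y}) < card Y" using Yp(1) y by (rule card_Diff1_less)
    ultimately show False using d1 dd Yp(2) by simp
  qed
  then have st: "stationary {\<alpha>\<in>T. \<delta> < \<alpha> \<and> tr \<C> \<delta> \<alpha> \<inter> (Y - {y}) = {}}" unfolding hitd_def by blast
  have "stationary ({\<alpha>\<in>T. \<delta> < \<alpha> \<and> tr \<C> \<delta> \<alpha> \<inter> (Y - {y}) = {}} - {\<alpha>\<in>T. \<delta> < \<alpha> \<and> tr \<C> \<delta> \<alpha> \<inter> Y = {}})"
    using stat_diff[OF st] Yp(3) unfolding hitd_def by blast
  moreover have "{\<alpha>\<in>T. \<delta> < \<alpha> \<and> tr \<C> \<delta> \<alpha> \<inter> (Y - {y}) = {}} - {\<alpha>\<in>T. \<delta> < \<alpha> \<and> tr \<C> \<delta> \<alpha> \<inter> Y = {}}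
     \<subseteq> {\<alpha>\<in>T. \<delta> < \<alpha> \<and> tr \<C> \<delta> \<alpha> \<inter> Y = {y}}" using y by blast
  ultimately show ?thesis using stat_mono by blast
qed

lemma MH_trace:
  assumes dd: "\<delta>1 \<le> \<delta>" and Y: "Y \<in> MH \<C> T m0 \<delta>" and y: "y \<in> Y"
  shows "y \<subseteq> {x. x < \<delta>}"
proof -
  obtain \<alpha> where "\<alpha> \<in> {\<alpha>\<in>T. \<delta> < \<alpha> \<and> tr \<C> \<delta> \<alpha> \<inter> Y = {y}}"
    using stat_nonempty[OF crit[OF dd Y y]] by blast
  then have "y \<in> tr \<C> \<delta> \<alpha>" by blast
  then show ?thesis unfolding tr_def by blast
qed

lemma MH_fin:
  assumes dd: "\<delta>1 \<le> \<delta>"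
  shows "finite (MH \<C> T m0 \<delta>) \<and> card (MH \<C> T m0 \<delta>) \<le> n ^ m0"
proof (rule ccontr)
  let ?N = "n ^ m0"
  assume neg: "\<not> ?thesis"
  obtain \<Y> where YY: "\<Y> \<subseteq> MH \<C> T m0 \<delta>" "finite \<Y>" "card \<Y> = Suc ?N"
  proof (cases "finite (MH \<C> T m0 \<delta>)")
    case True
    then have "Suc ?N \<le> card (MH \<C> T m0 \<delta>)" using neg by simp
    then show ?thesis using that obtain_subset_with_card_n by metis
  next
    case False
    then show ?thesis using that infinite_arbitrarily_large by metis
  qed
  define Bad where "Bad = (\<Union>Y\<in>\<Y>. {\<alpha>\<in>T. \<delta> < \<alpha> \<and> tr \<C> \<delta> \<alpha> \<inter> Y = {}})"
  have nsBad: "\<not> stationary Bad" unfolding Bad_def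
  proof (rule ns_finite_UN[OF YY(2)])
    show "\<forall>Y\<in>\<Y>. \<not> stationary {\<alpha>\<in>T. \<delta> < \<alpha> \<and> tr \<C> \<delta> \<alpha> \<inter> Y = {}}"
      using YY(1) unfolding MH_def hitd_def by blast
  qed
  define A where "A = {\<alpha>\<in>T. \<delta> < \<alpha>} - Bad"
  define E where "E = tr \<C> \<delta> ` A"
  have Eb: "\<forall>e\<in>E. finite e \<and> card e \<le> n"
    unfolding E_def A_def using tr_finite tr_card by blast
  have sub: "\<Y> \<subseteq> MT m0 E"
  proof
    fix Y assume Y: "Y \<in> \<Y>"
    then have YM: "Y \<in> MH \<C> T m0 \<delta>" using YY(1) by blast
    then have Yp: "finite Y" "card Y = m0" unfolding MH_def by blast+
    have hits: "\<forall>e\<in>E. e \<inter> Y \<noteq> {}"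
    proof
      fix e assume "e \<in> E"
      then obtain \<alpha> where "\<alpha> \<in> A" "e = tr \<C> \<delta> \<alpha>" unfolding E_def by blast
      then show "e \<inter> Y \<noteq> {}" unfolding A_def Bad_def using Y by blast
    qed
    have mins: "\<forall>y\<in>Y. \<exists>e\<in>E. e \<inter> Y = {y}"
    proof
      fix y assume y: "y \<in> Y"
      have "stationary ({\<alpha>\<in>T. \<delta> < \<alpha> \<and> tr \<C> \<delta> \<alpha> \<inter> Y = {y}} - Bad)"
        using stat_diff[OF crit[OF dd YM y] nsBad] .
      then obtain \<alpha> where "\<alpha> \<in> {\<alpha>\<in>T. \<delta> < \<alpha> \<and> tr \<C> \<delta> \<alpha> \<inter> Y = {y}} - Bad"
        using stat_nonempty by blast
      then have "\<alpha> \<in> A" "tr \<C> \<delta> \<alpha> \<inter> Y = {y}" unfolding A_def by blast+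
      then show "\<exists>e\<in>E. e \<inter> Y = {y}" unfolding E_def by blast
    qed
    show "Y \<in> MT m0 E" unfolding MT_def using Yp hits mins by simp
  qed
  have "finite (MT m0 E) \<and> card (MT m0 E) \<le> ?N" using MT_bound[OF Eb n_pos] .
  then have "card \<Y> \<le> ?N" using card_mono[OF _ sub] le_trans by blast
  then show False using YY(3) by simp
qed

lemma MH_ne: "\<delta>1 \<le> \<delta> \<Longrightarrow> MH \<C> T m0 \<delta> \<noteq> {}"
  using mh_ex[of \<delta>] d1 unfolding MH_def by auto

lemma restr_MH:
  assumes "\<delta>1 \<le> \<delta>" "\<delta> \<le> \<delta>'" "Y \<in> MH \<C> T m0 \<delta>'"
  shows "restr \<delta> Y \<in> MH \<C> T m0 \<delta>"
proof -
  have Yp: "finite Y" "card Y = m0" "hitd \<C> T \<delta>' Y" using assms(3) unfolding MH_def by blast+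
  have h: "hitd \<C> T \<delta> (restr \<delta> Y)" using hit_restr[OF assms(2) Yp(3)] .
  have f: "finite (restr \<delta> Y)" using restr_finite[OF Yp(1)] .
  have "m0 \<le> card (restr \<delta> Y)" using mh_le[OF f h] d1 assms(1) by simp
  moreover have "card (restr \<delta> Y) \<le> m0" using restr_card[OF Yp(1)] Yp(2) by simp
  ultimately show ?thesis unfolding MH_def using h f by simp
qed

lemma RR_sub_MH: "\<delta>1 \<le> \<delta> \<Longrightarrow> \<delta> \<le> \<rho> \<Longrightarrow> RR \<C> T m0 \<rho> \<delta> \<subseteq> MH \<C> T m0 \<delta>"
  unfolding RR_def using restr_MH by blast

lemma RR_mono:
  assumes "\<delta>1 \<le> \<delta>" "\<delta> \<le> \<rho>" "\<rho> \<le> \<rho>'"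
  shows "RR \<C> T m0 \<rho>' \<delta> \<subseteq> RR \<C> T m0 \<rho> \<delta>"
proof
  fix Z assume "Z \<in> RR \<C> T m0 \<rho>' \<delta>"
  then obtain Y where Y: "Y \<in> MH \<C> T m0 \<rho>'" "Z = restr \<delta> Y" unfolding RR_def by blast
  have d1r: "\<delta>1 \<le> \<rho>" using assms(1,2) by (rule order_trans)
  have "restr \<rho> Y \<in> MH \<C> T m0 \<rho>" using restr_MH[OF d1r assms(3) Y(1)] .
  moreover have "Z = restr \<delta> (restr \<rho> Y)" using Y(2) restr_restr[OF assms(2)] by simp
  ultimately show "Z \<in> RR \<C> T m0 \<rho> \<delta>" unfolding RR_def by blast
qed

lemma RR_fin: "\<delta>1 \<le> \<delta> \<Longrightarrow> \<delta> \<le> \<rho> \<Longrightarrow> finite (RR \<C> T m0 \<rho> \<delta>)"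
  using RR_sub_MH MH_fin finite_subset by blast

lemma EE_stab:
  assumes dd: "\<delta>1 \<le> \<delta>"
  shows "\<exists>\<rho>0. \<delta> \<le> \<rho>0 \<and> (\<forall>\<rho>. \<rho>0 \<le> \<rho> \<longrightarrow> RR \<C> T m0 \<rho> \<delta> = EE \<C> T m0 \<delta>)"
proof -
  define c where "c = (LEAST c. \<exists>\<rho>. \<delta> \<le> \<rho> \<and> card (RR \<C> T m0 \<rho> \<delta>) = c)"
  have "\<exists>\<rho>. \<delta> \<le> \<rho> \<and> card (RR \<C> T m0 \<rho> \<delta>) = c" unfolding c_def
    by (rule LeastI_ex) blast
  then obtain \<rho>0 where r0: "\<delta> \<le> \<rho>0" "card (RR \<C> T m0 \<rho>0 \<delta>) = c" by blast
  have eq: "RR \<C> T m0 \<rho> \<delta> = RR \<C> T m0 \<rho>0 \<delta>" if "\<rho>0 \<le> \<rho>" for \<rho>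
  proof (rule card_subset_eq)
    show "finite (RR \<C> T m0 \<rho>0 \<delta>)" using RR_fin[OF dd r0(1)] .
    show "RR \<C> T m0 \<rho> \<delta> \<subseteq> RR \<C> T m0 \<rho>0 \<delta>" using RR_mono[OF dd r0(1) that] .
    have "\<delta> \<le> \<rho>" using r0(1) that by (rule order_trans)
    then have "c \<le> card (RR \<C> T m0 \<rho> \<delta>)" unfolding c_def by (intro Least_le) blast
    moreover have "card (RR \<C> T m0 \<rho> \<delta>) \<le> card (RR \<C> T m0 \<rho>0 \<delta>)"
      using card_mono[OF RR_fin[OF dd r0(1)] RR_mono[OF dd r0(1) that]] .
    ultimately show "card (RR \<C> T m0 \<rho> \<delta>) = card (RR \<C> T m0 \<rho>0 \<delta>)" using r0(2) by simp
  qed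
  have "EE \<C> T m0 \<delta> = RR \<C> T m0 \<rho>0 \<delta>"
  proof
    show "EE \<C> T m0 \<delta> \<subseteq> RR \<C> T m0 \<rho>0 \<delta>" unfolding EE_def by (rule INT_lower) (use r0(1) in simp)
    show "RR \<C> T m0 \<rho>0 \<delta> \<subseteq> EE \<C> T m0 \<delta>" unfolding EE_def
    proof (intro INT_greatest)
      fix \<rho> assume "\<rho> \<in> {\<rho>. \<delta> \<le> \<rho>}"
      then have dr: "\<delta> \<le> \<rho>" by simp
      show "RR \<C> T m0 \<rho>0 \<delta> \<subseteq> RR \<C> T m0 \<rho> \<delta>"
      proof (cases "\<rho>0 \<le> \<rho>")
        case True show ?thesis using eq[OF True] by (rule equalityD2)
      next
        case False then have "\<rho> \<le> \<rho>0" by simp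
        then show ?thesis by (rule RR_mono[OF dd dr])
      qed
    qed
  qed
  then have "\<forall>\<rho>. \<rho>0 \<le> \<rho> \<longrightarrow> RR \<C> T m0 \<rho> \<delta> = EE \<C> T m0 \<delta>" using eq by metis
  then show ?thesis using r0(1) by blast
qed

lemma EE_restr:
  assumes "\<delta>1 \<le> \<delta>" "\<delta> \<le> \<delta>'"
  shows "restr \<delta> ` EE \<C> T m0 \<delta>' = EE \<C> T m0 \<delta>"
proof -
  have d1': "\<delta>1 \<le> \<delta>'" using assms by (rule order_trans)
  obtain \<rho>1 where r1: "\<delta> \<le> \<rho>1" "\<forall>\<rho>. \<rho>1 \<le> \<rho> \<longrightarrow> RR \<C> T m0 \<rho> \<delta> = EE \<C> T m0 \<delta>"
    using EE_stab[OF assms(1)] by blast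
  obtain \<rho>2 where r2: "\<delta>' \<le> \<rho>2" "\<forall>\<rho>. \<rho>2 \<le> \<rho> \<longrightarrow> RR \<C> T m0 \<rho> \<delta>' = EE \<C> T m0 \<delta>'"
    using EE_stab[OF d1'] by blast
  define \<rho> where "\<rho> = max \<rho>1 \<rho>2"
  have "\<rho>1 \<le> \<rho>" "\<rho>2 \<le> \<rho>" unfolding \<rho>_def by simp_all
  then have "RR \<C> T m0 \<rho> \<delta> = EE \<C> T m0 \<delta>" "RR \<C> T m0 \<rho> \<delta>' = EE \<C> T m0 \<delta>'"
    using r1(2) r2(2) by blast+
  moreover have "restr \<delta> ` RR \<C> T m0 \<rho> \<delta>' = RR \<C> T m0 \<rho> \<delta>"
    unfolding RR_def image_image restr_restr[OF assms(2)] ..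
  ultimately show ?thesis by simp
qed

lemma EE_props:
  assumes "\<delta>1 \<le> \<delta>"
  shows "EE \<C> T m0 \<delta> \<subseteq> MH \<C> T m0 \<delta>" "finite (EE \<C> T m0 \<delta>)" "card (EE \<C> T m0 \<delta>) \<le> n ^ m0"
    "EE \<C> T m0 \<delta> \<noteq> {}"
proof -
  obtain \<rho>0 where r0: "\<delta> \<le> \<rho>0" "\<forall>\<rho>. \<rho>0 \<le> \<rho> \<longrightarrow> RR \<C> T m0 \<rho> \<delta> = EE \<C> T m0 \<delta>"
    using EE_stab[OF assms] by blast
  then have e: "EE \<C> T m0 \<delta> = RR \<C> T m0 \<rho>0 \<delta>" by (metis order_refl)
  show s: "EE \<C> T m0 \<delta> \<subseteq> MH \<C> T m0 \<delta>" unfolding e using RR_sub_MH[OF assms r0(1)] .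
  show "finite (EE \<C> T m0 \<delta>)" using s MH_fin[OF assms] finite_subset by blast
  show "card (EE \<C> T m0 \<delta>) \<le> n ^ m0" using card_mono[OF _ s] MH_fin[OF assms] le_trans by blast
  have "\<delta>1 \<le> \<rho>0" using assms r0(1) by (rule order_trans)
  then show "EE \<C> T m0 \<delta> \<noteq> {}" unfolding e RR_def using MH_ne by blast
qed

lemma EE_event: "\<exists>\<delta>2. \<delta>1 \<le> \<delta>2 \<and> (\<forall>\<delta>. \<delta>2 \<le> \<delta> \<longrightarrow> card (EE \<C> T m0 \<delta>) = card (EE \<C> T m0 \<delta>2))"
proof -
  define K where "K = (\<lambda>\<delta>. card (EE \<C> T m0 \<delta>)) ` {\<delta>. \<delta>1 \<le> \<delta>}"
  have "K \<subseteq> {0..n ^ m0}"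
  proof
    fix k assume "k \<in> K"
    then obtain \<delta> where "\<delta> \<in> {\<delta>. \<delta>1 \<le> \<delta>}" "k = card (EE \<C> T m0 \<delta>)" unfolding K_def by (rule imageE)
    then show "k \<in> {0..n ^ m0}" using EE_props(3)[of \<delta>] by simp
  qed
  then have fin: "finite K" using finite_subset by blast
  have "\<delta>1 \<in> {\<delta>. \<delta>1 \<le> \<delta>}" by simp
  then have "K \<noteq> {}" unfolding K_def by blast
  then have "Max K \<in> K" using fin by simp
  then obtain \<delta>2 where d2': "\<delta>2 \<in> {\<delta>. \<delta>1 \<le> \<delta>}" "Max K = card (EE \<C> T m0 \<delta>2)" unfolding K_def by (rule imageE)
  then have d2: "\<delta>1 \<le> \<delta>2" "card (EE \<C> T m0 \<delta>2) = Max K" by simp_all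
  have "card (EE \<C> T m0 \<delta>) = card (EE \<C> T m0 \<delta>2)" if "\<delta>2 \<le> \<delta>" for \<delta>
  proof -
    have d1d: "\<delta>1 \<le> \<delta>" using d2(1) that by (rule order_trans)
    have "card (EE \<C> T m0 \<delta>2) = card (restr \<delta>2 ` EE \<C> T m0 \<delta>)" using EE_restr[OF d2(1) that] by simp
    also have "\<dots> \<le> card (EE \<C> T m0 \<delta>)" by (rule card_image_le) (rule EE_props(2)[OF d1d])
    finally have "card (EE \<C> T m0 \<delta>2) \<le> card (EE \<C> T m0 \<delta>)" .
    moreover have "card (EE \<C> T m0 \<delta>) \<in> K" unfolding K_def using d1d by blast
    then have "card (EE \<C> T m0 \<delta>) \<le> Max K" using fin by simp
    ultimately show ?thesis using d2(2) by simp
  qed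
  then show ?thesis using d2(1) by blast
qed



context
  fixes \<delta>2 :: 'a and Y0 :: "'a set set"
  assumes d12: "\<delta>1 \<le> \<delta>2" and d2: "\<forall>\<delta>. \<delta>2 \<le> \<delta> \<longrightarrow> card (EE \<C> T m0 \<delta>) = card (EE \<C> T m0 \<delta>2)"
    and Y0: "Y0 \<in> EE \<C> T m0 \<delta>2"
begin

lemma d1_of: "\<delta>2 \<le> \<delta> \<Longrightarrow> \<delta>1 \<le> \<delta>"
  using d12 by (rule order_trans)

lemma EE_inj:
  assumes "\<delta>2 \<le> \<delta>" "\<delta> \<le> \<delta>'"
  shows "inj_on (restr \<delta>) (EE \<C> T m0 \<delta>')"
proof (rule eq_card_imp_inj_on)
  have dd': "\<delta>2 \<le> \<delta>'" using assms by (rule order_trans)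
  show "finite (EE \<C> T m0 \<delta>')" using EE_props(2)[OF d1_of[OF dd']] .
  have "card (restr \<delta> ` EE \<C> T m0 \<delta>') = card (EE \<C> T m0 \<delta>)" using EE_restr[OF d1_of[OF assms(1)] assms(2)] by simp
  also have "\<dots> = card (EE \<C> T m0 \<delta>2)" using d2 assms(1) by blast
  also have "\<dots> = card (EE \<C> T m0 \<delta>')" using d2 dd' by metis
  finally show "card (restr \<delta> ` EE \<C> T m0 \<delta>') = card (EE \<C> T m0 \<delta>')" .
qed


lemma X_uniq:
  assumes "\<delta>2 \<le> \<delta>" "Y \<in> EE \<C> T m0 \<delta>" "restr \<delta>2 Y = Y0"
  shows "(XX \<C> T m0 \<delta>2 Y0) \<delta> = Y"
  unfolding XX_def
proof (rule the_equality)
  show "Y \<in> EE \<C> T m0 \<delta> \<and> restr \<delta>2 Y = Y0" using assms(2,3) by blast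
  fix Y' assume "Y' \<in> EE \<C> T m0 \<delta> \<and> restr \<delta>2 Y' = Y0"
  then show "Y' = Y" using EE_inj[OF order_refl assms(1)] assms(2,3) unfolding inj_on_def by blast
qed

lemma X_prop:
  assumes "\<delta>2 \<le> \<delta>"
  shows "(XX \<C> T m0 \<delta>2 Y0) \<delta> \<in> EE \<C> T m0 \<delta> \<and> restr \<delta>2 ((XX \<C> T m0 \<delta>2 Y0) \<delta>) = Y0"
proof -
  have "Y0 \<in> restr \<delta>2 ` EE \<C> T m0 \<delta>" using Y0 EE_restr[OF d12 assms] by simp
  then obtain Y where "Y \<in> EE \<C> T m0 \<delta>" "restr \<delta>2 Y = Y0" by (metis imageE)
  then show ?thesis using X_uniq[OF assms] by simp
qed

lemma X_coh:
  assumes "\<delta>2 \<le> \<delta>" "\<delta> \<le> \<delta>'"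
  shows "restr \<delta> ((XX \<C> T m0 \<delta>2 Y0) \<delta>') = (XX \<C> T m0 \<delta>2 Y0) \<delta>"
proof -
  have dd': "\<delta>2 \<le> \<delta>'" using assms by (rule order_trans)
  have "restr \<delta> ((XX \<C> T m0 \<delta>2 Y0) \<delta>') \<in> EE \<C> T m0 \<delta>"
    using X_prop[OF dd'] EE_restr[OF d1_of[OF assms(1)] assms(2)] by blast
  moreover have "restr \<delta>2 (restr \<delta> ((XX \<C> T m0 \<delta>2 Y0) \<delta>')) = Y0"
    using restr_restr[OF assms(1)] X_prop[OF dd'] by simp
  ultimately show ?thesis using X_uniq[OF assms(1)] by simp
qed

lemma X_MH: "\<delta>2 \<le> \<delta> \<Longrightarrow> (XX \<C> T m0 \<delta>2 Y0) \<delta> \<in> MH \<C> T m0 \<delta>"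
  using X_prop EE_props(1)[OF d1_of] by blast

lemma X_trace: "\<delta>2 \<le> \<delta> \<Longrightarrow> y \<in> (XX \<C> T m0 \<delta>2 Y0) \<delta> \<Longrightarrow> y \<subseteq> {x. x < \<delta>}"
  using MH_trace[OF d1_of X_MH] by blast

lemma Y0_MH: "Y0 \<in> MH \<C> T m0 \<delta>2"
  using Y0 EE_props(1)[OF d12] by blast

lemma X_inj2:
  assumes "\<delta>2 \<le> \<delta>"
  shows "inj_on (\<lambda>y. y \<inter> {x. x < \<delta>2}) ((XX \<C> T m0 \<delta>2 Y0) \<delta>)"
proof (rule eq_card_imp_inj_on)
  have XM: "(XX \<C> T m0 \<delta>2 Y0) \<delta> \<in> MH \<C> T m0 \<delta>" using X_MH[OF assms] .
  show "finite ((XX \<C> T m0 \<delta>2 Y0) \<delta>)" using XM unfolding MH_def by blast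
  have "(\<lambda>y. y \<inter> {x. x < \<delta>2}) ` (XX \<C> T m0 \<delta>2 Y0) \<delta> = Y0" using X_prop[OF assms] unfolding restr_def by blast
  then have "card ((\<lambda>y. y \<inter> {x. x < \<delta>2}) ` (XX \<C> T m0 \<delta>2 Y0) \<delta>) = m0" using Y0_MH unfolding MH_def by simp
  also have "\<dots> = card ((XX \<C> T m0 \<delta>2 Y0) \<delta>)" using XM unfolding MH_def by simp
  finally show "card ((\<lambda>y. y \<inter> {x. x < \<delta>2}) ` (XX \<C> T m0 \<delta>2 Y0) \<delta>) = card ((XX \<C> T m0 \<delta>2 Y0) \<delta>)" .
qed


lemma bz_uniq:
  assumes "\<delta>2 \<le> \<delta>" "y \<in> (XX \<C> T m0 \<delta>2 Y0) \<delta>" "y \<inter> {x. x < \<delta>2} = z"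
  shows "(bzz \<C> T m0 \<delta>2 Y0) z \<delta> = y"
  unfolding bzz_def
proof (rule the_equality)
  show "y \<in> (XX \<C> T m0 \<delta>2 Y0) \<delta> \<and> y \<inter> {x. x < \<delta>2} = z" using assms(2,3) by blast
  fix y' assume "y' \<in> (XX \<C> T m0 \<delta>2 Y0) \<delta> \<and> y' \<inter> {x. x < \<delta>2} = z"
  then show "y' = y" using X_inj2[OF assms(1)] assms(2,3) unfolding inj_on_def by blast
qed

lemma bz_prop:
  assumes "\<delta>2 \<le> \<delta>" "z \<in> Y0"
  shows "(bzz \<C> T m0 \<delta>2 Y0) z \<delta> \<in> (XX \<C> T m0 \<delta>2 Y0) \<delta> \<and> (bzz \<C> T m0 \<delta>2 Y0) z \<delta> \<inter> {x. x < \<delta>2} = z"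
proof -
  have "z \<in> restr \<delta>2 ((XX \<C> T m0 \<delta>2 Y0) \<delta>)" using X_prop[OF assms(1)] assms(2) by simp
  then obtain y where "y \<in> (XX \<C> T m0 \<delta>2 Y0) \<delta>" "z = y \<inter> {x. x < \<delta>2}" unfolding restr_def by (rule imageE)
  then show ?thesis using bz_uniq[OF assms(1)] by simp
qed

lemma bz_coh:
  assumes "\<delta>2 \<le> \<delta>" "\<delta> \<le> \<delta>'" "z \<in> Y0"
  shows "(bzz \<C> T m0 \<delta>2 Y0) z \<delta>' \<inter> {x. x < \<delta>} = (bzz \<C> T m0 \<delta>2 Y0) z \<delta>"
proof -
  have dd': "\<delta>2 \<le> \<delta>'" using assms(1,2) by (rule order_trans)
  have b': "(bzz \<C> T m0 \<delta>2 Y0) z \<delta>' \<in> (XX \<C> T m0 \<delta>2 Y0) \<delta>'" "(bzz \<C> T m0 \<delta>2 Y0) z \<delta>' \<inter> {x. x < \<delta>2} = z" using bz_prop[OF dd' assms(3)] by blast+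
  have "(bzz \<C> T m0 \<delta>2 Y0) z \<delta>' \<inter> {x. x < \<delta>} \<in> restr \<delta> ((XX \<C> T m0 \<delta>2 Y0) \<delta>')" unfolding restr_def using b'(1) by blast
  then have "(bzz \<C> T m0 \<delta>2 Y0) z \<delta>' \<inter> {x. x < \<delta>} \<in> (XX \<C> T m0 \<delta>2 Y0) \<delta>" using X_coh[OF assms(1,2)] by simp
  moreover have "((bzz \<C> T m0 \<delta>2 Y0) z \<delta>' \<inter> {x. x < \<delta>}) \<inter> {x. x < \<delta>2} = z"
    using b'(2) assms(1) by (auto dest: less_le_trans)
  ultimately show ?thesis using bz_uniq[OF assms(1)] by simp
qed


lemma BB_cut:
  assumes "\<delta>2 \<le> \<delta>" "z \<in> Y0"
  shows "(BBB \<C> T m0 \<delta>2 Y0) z \<inter> {x. x < \<delta>} = (bzz \<C> T m0 \<delta>2 Y0) z \<delta>"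
proof
  show "(bzz \<C> T m0 \<delta>2 Y0) z \<delta> \<subseteq> (BBB \<C> T m0 \<delta>2 Y0) z \<inter> {x. x < \<delta>}"
  proof
    fix \<eta> assume h: "\<eta> \<in> (bzz \<C> T m0 \<delta>2 Y0) z \<delta>"
    have "(bzz \<C> T m0 \<delta>2 Y0) z \<delta> \<subseteq> {x. x < \<delta>}" using X_trace[OF assms(1)] bz_prop[OF assms] by blast
    then have "\<eta> < \<delta>" using h by blast
    then show "\<eta> \<in> (BBB \<C> T m0 \<delta>2 Y0) z \<inter> {x. x < \<delta>}" unfolding BBB_def using h assms(1) by blast
  qed
  show "(BBB \<C> T m0 \<delta>2 Y0) z \<inter> {x. x < \<delta>} \<subseteq> (bzz \<C> T m0 \<delta>2 Y0) z \<delta>"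
  proof
    fix \<eta> assume h: "\<eta> \<in> (BBB \<C> T m0 \<delta>2 Y0) z \<inter> {x. x < \<delta>}"
    then obtain \<delta>' where d': "\<delta>2 \<le> \<delta>'" "\<eta> < \<delta>'" "\<eta> \<in> (bzz \<C> T m0 \<delta>2 Y0) z \<delta>'" unfolding BBB_def by blast
    have e: "\<eta> < \<delta>" using h by blast
    show "\<eta> \<in> (bzz \<C> T m0 \<delta>2 Y0) z \<delta>"
    proof (cases "\<delta>' \<le> \<delta>")
      case True
      have "(bzz \<C> T m0 \<delta>2 Y0) z \<delta> \<inter> {x. x < \<delta>'} = (bzz \<C> T m0 \<delta>2 Y0) z \<delta>'" using bz_coh[OF d'(1) True assms(2)] .
      then show ?thesis using d'(3) by blast
    next
      case False
      then have "\<delta> \<le> \<delta>'" by simp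
      then have "(bzz \<C> T m0 \<delta>2 Y0) z \<delta>' \<inter> {x. x < \<delta>} = (bzz \<C> T m0 \<delta>2 Y0) z \<delta>" using bz_coh[OF assms(1) _ assms(2)] by blast
      then show ?thesis using d'(3) e by blast
    qed
  qed
qed


lemma stat_Int_club: "stationary (A::'a set) \<Longrightarrow> club C \<Longrightarrow> stationary (A \<inter> C)"
proof -
  assume A: "stationary A" and C: "club C"
  show "stationary (A \<inter> C)" unfolding stationary_def
  proof (intro allI impI)
    fix C' :: "'a set" assume "club C'"
    then have "club (C \<inter> C')" using club_Int[OF C] by blast
    then have "A \<inter> (C \<inter> C') \<noteq> {}" using A unfolding stationary_def by blast
    then show "A \<inter> C \<inter> C' \<noteq> {}" by blast
  qed
qed

lemma key:
  assumes aT: "\<alpha> \<in> T" and a2: "\<delta>2 < \<alpha>" and aL: "\<alpha> \<in> Lim"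
    and nd: "\<forall>\<delta>. \<delta>2 \<le> \<delta> \<and> \<delta> < \<alpha> \<longrightarrow> tr \<C> \<delta> \<alpha> \<inter> (XX \<C> T m0 \<delta>2 Y0) \<delta> \<noteq> {}"
  shows "\<exists>z\<in>Y0. (BBB \<C> T m0 \<delta>2 Y0) z \<inter> {x. x < \<alpha>} \<in> \<C> \<alpha>"
proof -
  have hita: "\<exists>D\<in>\<C> \<alpha>. D \<inter> {x. x < \<delta>} \<in> (XX \<C> T m0 \<delta>2 Y0) \<delta>" if hd: "\<delta>2 \<le> \<delta>" "\<delta> < \<alpha>" for \<delta>
  proof -
    have "tr \<C> \<delta> \<alpha> \<inter> (XX \<C> T m0 \<delta>2 Y0) \<delta> \<noteq> {}" using nd hd by blast
    then obtain y where "y \<in> tr \<C> \<delta> \<alpha>" "y \<in> (XX \<C> T m0 \<delta>2 Y0) \<delta>" by blast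
    then show ?thesis unfolding tr_def by blast
  qed
  have finC: "finite (\<C> \<alpha>)" "\<C> \<alpha> \<noteq> {}" using coh_fin[OF coh] by blast+
  have cof: "\<exists>D\<in>\<C> \<alpha>. \<forall>\<delta>'. \<delta>2 \<le> \<delta>' \<and> \<delta>' < \<alpha> \<longrightarrow> (\<exists>\<delta>. \<delta>' \<le> \<delta> \<and> \<delta> < \<alpha> \<and> D \<inter> {x. x < \<delta>} \<in> (XX \<C> T m0 \<delta>2 Y0) \<delta>)"
  proof (rule ccontr)
    assume "\<not> ?thesis"
    then have "\<forall>D\<in>\<C> \<alpha>. \<exists>\<delta>'. \<delta>2 \<le> \<delta>' \<and> \<delta>' < \<alpha> \<and> (\<forall>\<delta>. \<delta>' \<le> \<delta> \<and> \<delta> < \<alpha> \<longrightarrow> D \<inter> {x. x < \<delta>} \<notin> (XX \<C> T m0 \<delta>2 Y0) \<delta>)"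
      by blast
    then obtain f where f: "\<forall>D\<in>\<C> \<alpha>. \<delta>2 \<le> f D \<and> f D < \<alpha> \<and> (\<forall>\<delta>. f D \<le> \<delta> \<and> \<delta> < \<alpha> \<longrightarrow> D \<inter> {x. x < \<delta>} \<notin> (XX \<C> T m0 \<delta>2 Y0) \<delta>)"
      by metis
    define m where "m = Max (f ` \<C> \<alpha>)"
    have "m \<in> f ` \<C> \<alpha>" unfolding m_def using finC by simp
    then obtain D0 where "D0 \<in> \<C> \<alpha>" "m = f D0" by blast
    then have m: "\<delta>2 \<le> m" "m < \<alpha>" using f by auto
    obtain D where D: "D \<in> \<C> \<alpha>" "D \<inter> {x. x < m} \<in> (XX \<C> T m0 \<delta>2 Y0) m" using hita[OF m] by blast
    have "f D \<le> m" unfolding m_def using finC D(1) by simp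
    then show False using f D m(2) by blast
  qed
  then obtain D where D: "D \<in> \<C> \<alpha>"
    and Dc: "\<forall>\<delta>'. \<delta>2 \<le> \<delta>' \<and> \<delta>' < \<alpha> \<longrightarrow> (\<exists>\<delta>. \<delta>' \<le> \<delta> \<and> \<delta> < \<alpha> \<and> D \<inter> {x. x < \<delta>} \<in> (XX \<C> T m0 \<delta>2 Y0) \<delta>)"
    by blast
  have all: "D \<inter> {x. x < \<delta>} \<in> (XX \<C> T m0 \<delta>2 Y0) \<delta>" if hd: "\<delta>2 \<le> \<delta>" "\<delta> < \<alpha>" for \<delta>
  proof -
    have "\<exists>\<delta>''. \<delta> \<le> \<delta>'' \<and> \<delta>'' < \<alpha> \<and> D \<inter> {x. x < \<delta>''} \<in> (XX \<C> T m0 \<delta>2 Y0) \<delta>''"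
      using Dc hd by blast
    then obtain \<delta>'' where d'': "\<delta> \<le> \<delta>''" "\<delta>'' < \<alpha>" "D \<inter> {x. x < \<delta>''} \<in> (XX \<C> T m0 \<delta>2 Y0) \<delta>''"
      by blast
    have "(D \<inter> {x. x < \<delta>''}) \<inter> {x. x < \<delta>} \<in> restr \<delta> ((XX \<C> T m0 \<delta>2 Y0) \<delta>'')"
      unfolding restr_def using d''(3) by blast
    moreover have "(D \<inter> {x. x < \<delta>''}) \<inter> {x. x < \<delta>} = D \<inter> {x. x < \<delta>}" using d''(1) by (auto dest: less_le_trans)
    ultimately show ?thesis using X_coh[OF hd(1) d''(1)] by simp
  qed
  define z where "z = D \<inter> {x. x < \<delta>2}"
  have "D \<inter> {x. x < \<delta>2} \<in> (XX \<C> T m0 \<delta>2 Y0) \<delta>2" using all[OF order_refl a2] .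
  then have "(D \<inter> {x. x < \<delta>2}) \<inter> {x. x < \<delta>2} \<in> restr \<delta>2 ((XX \<C> T m0 \<delta>2 Y0) \<delta>2)" unfolding restr_def by blast
  then have zY: "z \<in> Y0" unfolding z_def using X_prop[OF order_refl] by simp
  have bD: "D \<inter> {x. x < \<delta>} = (bzz \<C> T m0 \<delta>2 Y0) z \<delta>" if "\<delta>2 \<le> \<delta>" "\<delta> < \<alpha>" for \<delta>
  proof -
    have "(D \<inter> {x. x < \<delta>}) \<inter> {x. x < \<delta>2} = z" unfolding z_def using that(1) by (auto dest: less_le_trans)
    then show ?thesis using bz_uniq[OF that(1) all[OF that]] by simp
  qed
  have Dsub: "D \<subseteq> {x. x < \<alpha>}" using coh_club[OF coh D] unfolding club_below_def by blast
  have "D = (BBB \<C> T m0 \<delta>2 Y0) z \<inter> {x. x < \<alpha>}"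
  proof (intro set_eqI iffI)
    fix \<eta> assume h: "\<eta> \<in> D"
    then have e: "\<eta> < \<alpha>" using Dsub by blast
    have "max \<eta> \<delta>2 < \<alpha>" using e a2 by simp
    then obtain \<delta> where d: "max \<eta> \<delta>2 < \<delta>" "\<delta> < \<alpha>" using aL unfolding Lim_def by blast
    then have d2d: "\<delta>2 \<le> \<delta>" and ed: "\<eta> < \<delta>" by (simp_all add: less_imp_le)
    have "\<eta> \<in> D \<inter> {x. x < \<delta>}" using h ed by blast
    then have "\<eta> \<in> (BBB \<C> T m0 \<delta>2 Y0) z \<inter> {x. x < \<delta>}" using bD[OF d2d d(2)] BB_cut[OF d2d zY] by simp
    then show "\<eta> \<in> (BBB \<C> T m0 \<delta>2 Y0) z \<inter> {x. x < \<alpha>}" using e by blast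
  next
    fix \<eta> assume h: "\<eta> \<in> (BBB \<C> T m0 \<delta>2 Y0) z \<inter> {x. x < \<alpha>}"
    then have e: "\<eta> < \<alpha>" by blast
    have "max \<eta> \<delta>2 < \<alpha>" using e a2 by simp
    then obtain \<delta> where d: "max \<eta> \<delta>2 < \<delta>" "\<delta> < \<alpha>" using aL unfolding Lim_def by blast
    then have d2d: "\<delta>2 \<le> \<delta>" and ed: "\<eta> < \<delta>" by (simp_all add: less_imp_le)
    have "\<eta> \<in> (BBB \<C> T m0 \<delta>2 Y0) z \<inter> {x. x < \<delta>}" using h ed by blast
    then have "\<eta> \<in> D \<inter> {x. x < \<delta>}" using bD[OF d2d d(2)] BB_cut[OF d2d zY] by simp
    then show "\<eta> \<in> D" by blast
  qed
  then show ?thesis using D zY by auto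
qed

lemma final: False
proof -
  define N where "N \<delta> = (if \<delta>2 \<le> \<delta> then {\<alpha>\<in>T. \<delta> < \<alpha> \<and> tr \<C> \<delta> \<alpha> \<inter> (XX \<C> T m0 \<delta>2 Y0) \<delta> = {}} else {})" for \<delta>
  have nsN: "\<forall>\<delta>. \<not> stationary (N \<delta>)"
  proof
    fix \<delta>
    show "\<not> stationary (N \<delta>)"
    proof (cases "\<delta>2 \<le> \<delta>")
      case True
      have "hitd \<C> T \<delta> ((XX \<C> T m0 \<delta>2 Y0) \<delta>)" using X_MH[OF True] unfolding MH_def by blast
      moreover have "N \<delta> = {\<alpha>\<in>T. \<delta> < \<alpha> \<and> tr \<C> \<delta> \<alpha> \<inter> (XX \<C> T m0 \<delta>2 Y0) \<delta> = {}}"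
        unfolding N_def using True by (rule if_P)
      ultimately show ?thesis unfolding hitd_def by simp
    next
      case False
      then have "N \<delta> = {}" unfolding N_def by (rule if_not_P)
      then show ?thesis using stat_nonempty by blast
    qed
  qed
  define S' where "S' = ({\<alpha>\<in>T. \<delta>2 < \<alpha>} \<inter> Lim) - {\<alpha>. \<exists>\<delta><\<alpha>. \<alpha> \<in> N \<delta>}"
  have stS': "stationary S'" unfolding S'_def
    using stat_diff[OF stat_Int_club[OF stat_tail[OF Tst] club_Lim] ns_diag[OF nsN]] .
  have cover: "S' \<subseteq> (\<Union>z\<in>Y0. {\<alpha>\<in>S'. (BBB \<C> T m0 \<delta>2 Y0) z \<inter> {x. x < \<alpha>} \<in> \<C> \<alpha>})"
  proof
    fix \<alpha> assume a: "\<alpha> \<in> S'"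
    then have aT: "\<alpha> \<in> T" and a2: "\<delta>2 < \<alpha>" and aL: "\<alpha> \<in> Lim" and aN: "\<forall>\<delta><\<alpha>. \<alpha> \<notin> N \<delta>"
      unfolding S'_def by blast+
    have nd: "\<forall>\<delta>. \<delta>2 \<le> \<delta> \<and> \<delta> < \<alpha> \<longrightarrow> tr \<C> \<delta> \<alpha> \<inter> (XX \<C> T m0 \<delta>2 Y0) \<delta> \<noteq> {}"
    proof (intro allI impI)
      fix \<delta> assume d: "\<delta>2 \<le> \<delta> \<and> \<delta> < \<alpha>"
      then have "\<alpha> \<notin> N \<delta>" using aN by blast
      moreover have "N \<delta> = {\<alpha>\<in>T. \<delta> < \<alpha> \<and> tr \<C> \<delta> \<alpha> \<inter> (XX \<C> T m0 \<delta>2 Y0) \<delta> = {}}"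
        unfolding N_def using d by simp
      ultimately show "tr \<C> \<delta> \<alpha> \<inter> (XX \<C> T m0 \<delta>2 Y0) \<delta> \<noteq> {}" using aT d by blast
    qed
    obtain z where "z \<in> Y0" "(BBB \<C> T m0 \<delta>2 Y0) z \<inter> {x. x < \<alpha>} \<in> \<C> \<alpha>"
      using key[OF aT a2 aL nd] by blast
    then show "\<alpha> \<in> (\<Union>z\<in>Y0. {\<alpha>\<in>S'. (BBB \<C> T m0 \<delta>2 Y0) z \<inter> {x. x < \<alpha>} \<in> \<C> \<alpha>})" using a by blast
  qed
  have finY0: "finite Y0" using Y0_MH unfolding MH_def by blast
  have "stationary (\<Union>z\<in>Y0. {\<alpha>\<in>S'. (BBB \<C> T m0 \<delta>2 Y0) z \<inter> {x. x < \<alpha>} \<in> \<C> \<alpha>})"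
    using stat_mono[OF stS' cover] .
  then obtain z where "z \<in> Y0" "stationary {\<alpha>\<in>S'. (BBB \<C> T m0 \<delta>2 Y0) z \<inter> {x. x < \<alpha>} \<in> \<C> \<alpha>}"
    using stat_finite_UN[OF finY0] by blast
  then have "is_thread \<C> ((BBB \<C> T m0 \<delta>2 Y0) z)"
    using thread_of_unb[OF coh] stat_unb by blast
  then show False using nothr by blast
qed

end

end
end

lemma main_contra:
  fixes \<C> :: "'a \<Rightarrow> 'a set set" and S :: "'a set"
  assumes coh: "coherent_seq_fin \<C>" and nothr: "\<not> (\<exists>D. is_thread \<C> D)"
    and refl: "Refl_lt 3 S" and Sst: "stationary S"
  shows False
proof -
  have "S = (\<Union>k. {\<alpha>\<in>S. card (\<C> \<alpha>) \<le> k})" by blast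
  then have "stationary (\<Union>k. {\<alpha>\<in>S. card (\<C> \<alpha>) \<le> k})" using Sst by simp
  then obtain n where Tst: "stationary {\<alpha>\<in>S. card (\<C> \<alpha>) \<le> n}" using stat_nat_UN by blast
  define T where "T = {\<alpha>\<in>S. card (\<C> \<alpha>) \<le> n}"
  have TS: "T \<subseteq> S" unfolding T_def by blast
  have Tst': "stationary T" unfolding T_def using Tst .
  have Tn: "\<forall>\<alpha>\<in>T. card (\<C> \<alpha>) \<le> n" unfolding T_def by blast
  obtain \<delta>1 where d1': "\<forall>\<delta>. \<delta>1 \<le> \<delta> \<longrightarrow> mh \<C> T \<delta> = mh \<C> T \<delta>1"
    using mh_event[OF coh nothr refl TS Tst' Tn] by blast
  define m0 where "m0 = mh \<C> T \<delta>1"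
  have d1: "\<forall>\<delta>. \<delta>1 \<le> \<delta> \<longrightarrow> mh \<C> T \<delta> = m0" unfolding m0_def using d1' .
  obtain \<delta>2 where d12: "\<delta>1 \<le> \<delta>2" and d2: "\<forall>\<delta>. \<delta>2 \<le> \<delta> \<longrightarrow> card (EE \<C> T m0 \<delta>) = card (EE \<C> T m0 \<delta>2)"
    using EE_event[OF coh nothr refl TS Tst' Tn d1] by blast
  have "EE \<C> T m0 \<delta>2 \<noteq> {}" using EE_props(4)[OF coh nothr refl TS Tst' Tn d1 d12] .
  then obtain Y0 where Y0: "Y0 \<in> EE \<C> T m0 \<delta>2" by blast
  show False using final[OF coh nothr refl TS Tst' Tn d1 d12 d2 Y0] .
qed

end

theorem theorem2p6:
  assumes "regular_uncountable_cardinal_type TYPE('a::wellorder)"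
    and "square_fin TYPE('a)"
    and "S \<subseteq> (UNIV :: 'a set)"
    and "stationary S"
  shows "\<not> Refl_lt 3 S"
proof
  assume refl: "Refl_lt 3 S"
  obtain \<C> :: "'a \<Rightarrow> 'a set set" where coh: "coherent_seq_fin \<C>" and nothr: "\<not> (\<exists>D. is_thread \<C> D)"
    using assms(2) unfolding square_fin_def by blast
  show False using main_contra[OF assms(1) coh nothr refl assms(4)] .
qed

end
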